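(* Let $N\ge 2$, $l\ge 1$, $\sigma\in\mathfrak S_{N,l}$, and let $\mathsf M_\sigma=(Q,\Sigma,\Delta,\delta,\lambda)$ be the semi-Mealy machine by $\sigma$. Let $k\ge 1$ and let $J=(j_1,\dots,j_k)\in\{1,\dots,N\}^k$ be nonperiodic. Decompose the set $Q_J$ of periodic states into its orbits, $Q_J=[p_1]\sqcup\cdots\sqcup[p_M]$ with $p_1,\dots,p_M\in Q_J$, and put $r_i=\#[p_i]$. For $i=1,\dots,M$ define the word $J_i$ over $\{1,\dots,N\}$ by $b_{J_i}=\lambda(p_i,(a_J)^{r_i})$. Then $$P(J)\circ\psi_\sigma \cong P(J_1)\oplus\cdots\oplus P(J_M),$$ where $\cong$ denotes unitary equivalence of representations of $\mathcal O_N$.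
   Context: $\mathcal O_N$ ($N\ge2$) is the Cuntz algebra, the C$^*$-algebra universally generated by $s_1,\dots,s_N$ with $s_i^*s_j=\delta_{ij}I$ and $\sum_{i=1}^N s_is_i^*=I$. For $J=(j_1,\dots,j_k)$ write $s_J=s_{j_1}\cdots s_{j_k}$. Convention: $\{1,\dots,N\}^0=\{0\}$. $P(J)$: for $J=(j_1,\dots,j_k)\in\{1,\dots,N\}^k$, a representation $(\mathcal H,\pi)$ of $\mathcal O_N$ is $P(J)$ if there is a unit cyclic vector $\Omega$ with $\pi(s_J)\Omega=\Omega$ and $\{\pi(s_{j_i}\cdots s_{j_k})\Omega\}_{i=1}^k$ orthonormal; such a representation exists and is unique up to unitary equivalence, and $P(J)$ denotes it. For a representation $\pi$ and endomorphism $\rho$, $\pi\circ\rho$ is the composed representation. $J$ is nonperiodic if it cannot be written as the $r$-fold concatenation $J_0\cdots J_0$ of some word $J_0$ with $r\ge 2$. $\mathfrak S_{N,l}$ is the set of permutations of $\{1,\dots,N\}^l$. For $\sigma\in\mathfrak S_{N,l}$, $\psi_\sigma$ is the unital $*$-endomorphism of $\mathcal O_N$ with $\psi_\sigma(s_i)=u_\sigma s_i$, where $u_\sigma=\sum_{K\in\{1,\dots,N\}^l}s_{\sigma(K)}s_K^*$. For $x\in\{1,\dots,N\}^l$ write $\sigma^{-1}(x)=(y_1,\dots,y_l)$ and set $(\sigma^{-1})_1(x)=y_1$, $(\sigma^{-1})_{2,l}(x)=(y_2,\dots,y_l)$. Semi-Mealy machine by $\sigma$: $\mathsf M_\sigma=(Q,\Sigma,\Delta,\delta,\lambda)$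 with $Q=\{q_K:K\in\{1,\dots,N\}^{l-1}\}$, $\Sigma=\{a_1,\dots,a_N\}$, $\Delta=\{b_1,\dots,b_N\}$; for $i\in\{1,\dots,N\}$ and $K\in\{1,\dots,N\}^{l-1}$: if $l=1$, $\delta(q_0,a_i)=q_0$ and $\lambda(q_0,a_i)=b_{\sigma^{-1}(i)}$; if $l\ge2$, $\delta(q_K,a_i)=q_{(\sigma^{-1})_{2,l}(K,i)}$ and $\lambda(q_K,a_i)=b_{(\sigma^{-1})_1(K,i)}$. These are extended to words ($\Sigma^*$, $\Delta^*$ the free semigroups) by $\delta(q,wa)=\delta(\delta(q,w),a)$ and $\lambda(q,wa)=\lambda(q,w)\lambda(\delta(q,w),a)$. For $J=(j_1,\dots,j_k)$ let $a_J=a_{j_1}\cdots a_{j_k}$ and $b_J=b_{j_1}\cdots b_{j_k}$. $Q_J=\{q\in Q:\delta(q,(a_J)^n)=q\text{ for some }n\ge1\}$; on $Q_J$, $q\sim q'$ iff $\delta(q,(a_J)^n)=q'$ for some $n\ge1$, and $[q]$ is the equivalence class (orbit) of $q$. *)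

theory Defs
  imports "HOL-Analysis.Analysis" "HOL-Combinatorics.Permutations"
begin

text \<open>Words in {1,...,N}^k are lists of naturals of length k with entries in {1..N}.
  The convention {1,...,N}^0 = {0} is realised by the empty list.\<close>

definition words :: "nat \<Rightarrow> nat \<Rightarrow> nat list set" where
  "words N k = {w. length w = k \<and> set w \<subseteq> {1..N}}"

definition nonperiodic :: "nat list \<Rightarrow> bool" where
  "nonperiodic J \<longleftrightarrow> \<not> (\<exists>J0 r. r \<ge> 2 \<and> J = concat (replicate r J0))"

definition wpow :: "nat list \<Rightarrow> nat \<Rightarrow> nat list" where
  "wpow J n = concat (replicate n J)"

text \<open>States q_K are identified with words K of length l-1, input letters a_i and
  output letters b_i with i.  sigma is a permutation of words N l (extended by the
  identity outside), so its inverse is inv sigma.\<close>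

definition mealy_delta :: "(nat list \<Rightarrow> nat list) \<Rightarrow> nat list \<Rightarrow> nat \<Rightarrow> nat list" where
  "mealy_delta \<sigma> K i = tl (inv \<sigma> (K @ [i]))"

definition mealy_lambda :: "(nat list \<Rightarrow> nat list) \<Rightarrow> nat list \<Rightarrow> nat \<Rightarrow> nat" where
  "mealy_lambda \<sigma> K i = hd (inv \<sigma> (K @ [i]))"

fun delta_w :: "(nat list \<Rightarrow> nat list) \<Rightarrow> nat list \<Rightarrow> nat list \<Rightarrow> nat list" where
  "delta_w \<sigma> q [] = q"
| "delta_w \<sigma> q (a # w) = delta_w \<sigma> (mealy_delta \<sigma> q a) w"

fun lambda_w :: "(nat list \<Rightarrow> nat list) \<Rightarrow> nat list \<Rightarrow> nat list \<Rightarrow> nat list" where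
  "lambda_w \<sigma> q [] = []"
| "lambda_w \<sigma> q (a # w) = mealy_lambda \<sigma> q a # lambda_w \<sigma> (mealy_delta \<sigma> q a) w"

definition periodic_states :: "nat \<Rightarrow> nat \<Rightarrow> (nat list \<Rightarrow> nat list) \<Rightarrow> nat list \<Rightarrow> nat list set" where
  "periodic_states N l \<sigma> J =
     {q \<in> words N (l - 1). \<exists>n\<ge>1. delta_w \<sigma> q (wpow J n) = q}"

definition orbit_state :: "(nat list \<Rightarrow> nat list) \<Rightarrow> nat list \<Rightarrow> nat list \<Rightarrow> nat list set" where
  "orbit_state \<sigma> J q = {q'. \<exists>n\<ge>1. delta_w \<sigma> q (wpow J n) = q'}"

text \<open>Every complex Hilbert space is unitarily isomorphic to some l^2(X); we work
  with l^2 over an arbitrary type 'a.  Inner product is linear in the second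
  argument.\<close>

definition l2 :: "('a \<Rightarrow> complex) set" where
  "l2 = {f. (\<lambda>x. (cmod (f x))^2) summable_on UNIV}"

definition ip :: "('a \<Rightarrow> complex) \<Rightarrow> ('a \<Rightarrow> complex) \<Rightarrow> complex" where
  "ip f g = infsum (\<lambda>x. cnj (f x) * g x) UNIV"

definition l2norm :: "('a \<Rightarrow> complex) \<Rightarrow> real" where
  "l2norm f = sqrt (infsum (\<lambda>x. (cmod (f x))^2) UNIV)"

definition bounded_op :: "(('a \<Rightarrow> complex) \<Rightarrow> ('a \<Rightarrow> complex)) \<Rightarrow> bool" where
  "bounded_op A \<longleftrightarrow>
     (\<forall>f\<in>l2. A f \<in> l2) \<and>
     (\<forall>f\<in>l2. \<forall>g\<in>l2. A (\<lambda>x. f x + g x) = (\<lambda>x. A f x + A g x)) \<and>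
     (\<forall>f\<in>l2. \<forall>c. A (\<lambda>x. c * f x) = (\<lambda>x. c * A f x)) \<and>
     (\<exists>C. \<forall>f\<in>l2. l2norm (A f) \<le> C * l2norm f)"

text \<open>A representation of O_N on l^2('a) is given by the images S i of the
  generators s_i together with their adjoints Sa i = S i^*.\<close>

definition cuntz_rep ::
  "nat \<Rightarrow> (nat \<Rightarrow> ('a \<Rightarrow> complex) \<Rightarrow> ('a \<Rightarrow> complex)) \<Rightarrow>
          (nat \<Rightarrow> ('a \<Rightarrow> complex) \<Rightarrow> ('a \<Rightarrow> complex)) \<Rightarrow> bool" where
  "cuntz_rep N S Sa \<longleftrightarrow>
     (\<forall>i\<in>{1..N}. bounded_op (S i) \<and> bounded_op (Sa i) \<and>
        (\<forall>f\<in>l2. \<forall>g\<in>l2. ip (S i f) g = ip f (Sa i g))) \<and>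
     (\<forall>i\<in>{1..N}. \<forall>j\<in>{1..N}. \<forall>f\<in>l2. Sa i (S j f) = (if i = j then f else (\<lambda>x. 0))) \<and>
     (\<forall>f\<in>l2. f = (\<lambda>x. \<Sum>i=1..N. S i (Sa i f) x))"

text \<open>opw S K = pi(s_K), opa Sa K = pi(s_K^*).\<close>

fun opw :: "(nat \<Rightarrow> ('a \<Rightarrow> complex) \<Rightarrow> ('a \<Rightarrow> complex)) \<Rightarrow> nat list \<Rightarrow> ('a \<Rightarrow> complex) \<Rightarrow> ('a \<Rightarrow> complex)" where
  "opw S [] = id"
| "opw S (j # w) = S j \<circ> opw S w"

fun opa :: "(nat \<Rightarrow> ('a \<Rightarrow> complex) \<Rightarrow> ('a \<Rightarrow> complex)) \<Rightarrow> nat list \<Rightarrow> ('a \<Rightarrow> complex) \<Rightarrow> ('a \<Rightarrow> complex)" where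
  "opa Sa [] = id"
| "opa Sa (j # w) = opa Sa w \<circ> Sa j"

text \<open>Monomials in the generators and their adjoints: a letter (True, i) stands for
  s_i and (False, i) for s_i^*.\<close>

fun mono_op :: "(nat \<Rightarrow> ('a \<Rightarrow> complex) \<Rightarrow> ('a \<Rightarrow> complex)) \<Rightarrow> (nat \<Rightarrow> ('a \<Rightarrow> complex) \<Rightarrow> ('a \<Rightarrow> complex)) \<Rightarrow>
     (bool \<times> nat) list \<Rightarrow> ('a \<Rightarrow> complex) \<Rightarrow> ('a \<Rightarrow> complex)" where
  "mono_op S Sa [] = id"
| "mono_op S Sa ((b, i) # w) = (if b then S i else Sa i) \<circ> mono_op S Sa w"

definition c_span :: "('a \<Rightarrow> complex) set \<Rightarrow> ('a \<Rightarrow> complex) set" where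
  "c_span A = {g. \<exists>(n::nat) c v. (\<forall>i<n. v i \<in> A) \<and> g = (\<lambda>x. \<Sum>i<n. c i * v i x)}"

definition cl_span :: "('a \<Rightarrow> complex) set \<Rightarrow> ('a \<Rightarrow> complex) set" where
  "cl_span A = {f \<in> l2. \<forall>\<epsilon>>0. \<exists>g\<in>c_span A. l2norm (\<lambda>x. f x - g x) < \<epsilon>}"

text \<open>The cyclic subspace closure(pi(O_N) Omega): O_N is the closed span of the
  monomials in the s_i and s_i^*.\<close>
definition cyclic_space ::
  "nat \<Rightarrow> (nat \<Rightarrow> ('a \<Rightarrow> complex) \<Rightarrow> ('a \<Rightarrow> complex)) \<Rightarrow> (nat \<Rightarrow> ('a \<Rightarrow> complex) \<Rightarrow> ('a \<Rightarrow> complex)) \<Rightarrow>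
     ('a \<Rightarrow> complex) \<Rightarrow> ('a \<Rightarrow> complex) set" where
  "cyclic_space N S Sa \<Omega> = cl_span {mono_op S Sa w \<Omega> | w. set (map snd w) \<subseteq> {1..N}}"

definition PJ_vector ::
  "(nat \<Rightarrow> ('a \<Rightarrow> complex) \<Rightarrow> ('a \<Rightarrow> complex)) \<Rightarrow> nat list \<Rightarrow> ('a \<Rightarrow> complex) \<Rightarrow> bool" where
  "PJ_vector S J \<Omega> \<longleftrightarrow> \<Omega> \<in> l2 \<and> l2norm \<Omega> = 1 \<and> opw S J \<Omega> = \<Omega> \<and>
     (\<forall>i<length J. \<forall>i'<length J.
        ip (opw S (drop i J) \<Omega>) (opw S (drop i' J) \<Omega>) = (if i = i' then 1 else 0))"

text \<open>The representation (S, Sa) is (unitarily equivalent to) P(J).\<close>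
definition is_P ::
  "nat \<Rightarrow> (nat \<Rightarrow> ('a \<Rightarrow> complex) \<Rightarrow> ('a \<Rightarrow> complex)) \<Rightarrow> (nat \<Rightarrow> ('a \<Rightarrow> complex) \<Rightarrow> ('a \<Rightarrow> complex)) \<Rightarrow>
     nat list \<Rightarrow> bool" where
  "is_P N S Sa J \<longleftrightarrow> cuntz_rep N S Sa \<and>
     (\<exists>\<Omega>. PJ_vector S J \<Omega> \<and> cyclic_space N S Sa \<Omega> = l2)"

text \<open>The representation (S, Sa) is unitarily equivalent to P(J_0) + ... + P(J_{M-1}):
  l^2 is the orthogonal direct sum of M cyclic (hence invariant) subspaces,
  the i-th of which carries the subrepresentation P(J_i).\<close>
definition is_sum_P ::
  "nat \<Rightarrow> (nat \<Rightarrow> ('a \<Rightarrow> complex) \<Rightarrow> ('a \<Rightarrow> complex)) \<Rightarrow> (nat \<Rightarrow> ('a \<Rightarrow> complex) \<Rightarrow> ('a \<Rightarrow> complex)) \<Rightarrow>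
     nat \<Rightarrow> (nat \<Rightarrow> nat list) \<Rightarrow> bool" where
  "is_sum_P N S Sa M Js \<longleftrightarrow> cuntz_rep N S Sa \<and>
     (\<exists>\<Omega>s. (\<forall>i<M. PJ_vector S (Js i) (\<Omega>s i)) \<and>
        (\<forall>i<M. \<forall>i'<M. i \<noteq> i' \<longrightarrow>
            (\<forall>f\<in>cyclic_space N S Sa (\<Omega>s i). \<forall>g\<in>cyclic_space N S Sa (\<Omega>s i'). ip f g = 0)) \<and>
        cl_span (\<Union>i<M. cyclic_space N S Sa (\<Omega>s i)) = l2)"

text \<open>pi(u_sigma) = sum_K pi(s_{sigma K}) pi(s_K^*), and its adjoint.\<close>
definition u_op :: "nat \<Rightarrow> nat \<Rightarrow> (nat list \<Rightarrow> nat list) \<Rightarrow>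
    (nat \<Rightarrow> ('a \<Rightarrow> complex) \<Rightarrow> ('a \<Rightarrow> complex)) \<Rightarrow> (nat \<Rightarrow> ('a \<Rightarrow> complex) \<Rightarrow> ('a \<Rightarrow> complex)) \<Rightarrow>
    ('a \<Rightarrow> complex) \<Rightarrow> ('a \<Rightarrow> complex)" where
  "u_op N l \<sigma> S Sa f = (\<lambda>x. \<Sum>K\<in>words N l. opw S (\<sigma> K) (opa Sa K f) x)"

definition u_adj_op :: "nat \<Rightarrow> nat \<Rightarrow> (nat list \<Rightarrow> nat list) \<Rightarrow>
    (nat \<Rightarrow> ('a \<Rightarrow> complex) \<Rightarrow> ('a \<Rightarrow> complex)) \<Rightarrow> (nat \<Rightarrow> ('a \<Rightarrow> complex) \<Rightarrow> ('a \<Rightarrow> complex)) \<Rightarrow>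
    ('a \<Rightarrow> complex) \<Rightarrow> ('a \<Rightarrow> complex)" where
  "u_adj_op N l \<sigma> S Sa f = (\<lambda>x. \<Sum>K\<in>words N l. opw S K (opa Sa (\<sigma> K) f) x)"

text \<open>The composed representation pi o psi_sigma: generators
  pi(psi(s_i)) = pi(u) pi(s_i), adjoints pi(psi(s_i)^*) = pi(s_i^*) pi(u)^*.\<close>
definition comp_psi_S where
  "comp_psi_S N l \<sigma> S Sa = (\<lambda>i. u_op N l \<sigma> S Sa \<circ> S i)"

definition comp_psi_Sa where
  "comp_psi_Sa N l \<sigma> S Sa = (\<lambda>i. Sa i \<circ> u_adj_op N l \<sigma> S Sa)"

end

theory Submission
  imports Defs
begin

lemma l2_sq_summable: "f \<in> l2 \<Longrightarrow> (\<lambda>x. (cmod (f x))^2) summable_on UNIV"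
  by (simp add: l2_def)

lemma ip_abs_summable:
  assumes "f \<in> l2" "g \<in> l2"
  shows "(\<lambda>x. norm (cnj (f x) * g x)) summable_on UNIV"
proof -
  have s0: "(\<lambda>x. (cmod (f x))^2 + (cmod (g x))^2) summable_on UNIV"
    using assms by (intro summable_on_add l2_sq_summable)
  have s: "(\<lambda>x. ((cmod (f x))^2 + (cmod (g x))^2) / 2) summable_on UNIV"
    using summable_on_cmult_left[OF s0, of "1/2"] by simp
  have e: "(\<lambda>x. norm (((cmod (f x))^2 + (cmod (g x))^2) / 2)) = (\<lambda>x. ((cmod (f x))^2 + (cmod (g x))^2) / 2)"
    by (rule ext) simp
  have "(\<lambda>x. norm (((cmod (f x))^2 + (cmod (g x))^2) / 2)) summable_on UNIV"
    unfolding e by (rule s)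
  then show ?thesis
  proof (rule Infinite_Sum.abs_summable_on_comparison_test)
    fix x
    have "cmod (f x) * cmod (g x) \<le> ((cmod (f x))^2 + (cmod (g x))^2) / 2"
      using sum_squares_bound[of "cmod (f x)" "cmod (g x)"] by (simp add: mult.assoc)
    then show "norm (cnj (f x) * g x) \<le> norm (((cmod (f x))^2 + (cmod (g x))^2) / 2)"
      by (simp add: norm_mult)
  qed
qed

lemma ip_summable: "f \<in> l2 \<Longrightarrow> g \<in> l2 \<Longrightarrow> (\<lambda>x. cnj (f x) * g x) summable_on UNIV"
  by (rule abs_summable_summable[OF ip_abs_summable])

lemma l2_add: assumes "f \<in> l2" "g \<in> l2" shows "(\<lambda>x. f x + g x) \<in> l2"
proof -
  have s: "(\<lambda>x. 2 * (cmod (f x))^2 + 2 * (cmod (g x))^2) summable_on UNIV"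
    using assms by (intro summable_on_add summable_on_cmult_right l2_sq_summable)
  show ?thesis unfolding l2_def mem_Collect_eq
  proof (rule summable_on_comparison_test[OF s])
    fix x
    have "cmod (f x + g x) \<le> cmod (f x) + cmod (g x)" by (rule norm_triangle_ineq)
    then have "(cmod (f x + g x))^2 \<le> (cmod (f x) + cmod (g x))^2"
      by (simp add: power_mono)
    also have "\<dots> \<le> 2 * (cmod (f x))^2 + 2 * (cmod (g x))^2"
      unfolding power2_sum using sum_squares_bound[of "cmod (f x)" "cmod (g x)"] by linarith
    finally show "(cmod (f x + g x))^2 \<le> 2 * (cmod (f x))^2 + 2 * (cmod (g x))^2" .
  qed auto
qed

lemma l2_scale: assumes "f \<in> l2" shows "(\<lambda>x. c * f x) \<in> l2"
proof -
  have "(\<lambda>x. (cmod c)^2 * (cmod (f x))^2) summable_on UNIV"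
    using assms by (intro summable_on_cmult_right l2_sq_summable)
  then show ?thesis by (simp add: l2_def norm_mult power_mult_distrib)
qed

lemma l2_zero: "(\<lambda>x. 0) \<in> l2"
  by (simp add: l2_def)

lemma l2_minus: assumes "f \<in> l2" "g \<in> l2" shows "(\<lambda>x. f x - g x) \<in> l2"
proof -
  have "(\<lambda>x. f x + (-1) * g x) \<in> l2" using assms by (intro l2_add l2_scale)
  then show ?thesis by simp
qed

lemma l2_sum: assumes "\<And>i. i \<in> A \<Longrightarrow> f i \<in> l2" shows "(\<lambda>x. \<Sum>i\<in>A. f i x) \<in> l2"
  using assms
proof (induction A rule: infinite_finite_induct)
  case (insert a A) then show ?case by (simp add: l2_add)
qed (auto simp: l2_zero)

lemma ip_add_right: "f \<in> l2 \<Longrightarrow> g \<in> l2 \<Longrightarrow> h \<in> l2 \<Longrightarrow>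
   ip f (\<lambda>x. g x + h x) = ip f g + ip f h"
  unfolding ip_def by (simp add: distrib_left infsum_add ip_summable)

lemma ip_add_left: "f \<in> l2 \<Longrightarrow> g \<in> l2 \<Longrightarrow> h \<in> l2 \<Longrightarrow>
   ip (\<lambda>x. f x + g x) h = ip f h + ip g h"
  unfolding ip_def by (simp add: distrib_right infsum_add ip_summable)

lemma ip_scale_right: "f \<in> l2 \<Longrightarrow> g \<in> l2 \<Longrightarrow> ip f (\<lambda>x. c * g x) = c * ip f g"
proof -
  assume a: "f \<in> l2" "g \<in> l2"
  have "(\<lambda>x. cnj (f x) * (c * g x)) = (\<lambda>x. c * (cnj (f x) * g x))" by (auto simp: mult_ac)
  then show ?thesis unfolding ip_def
    using infsum_cmult_right[of c "\<lambda>x. cnj (f x) * g x" UNIV] ip_summable[OF a] by simp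
qed

lemma ip_scale_left: "f \<in> l2 \<Longrightarrow> g \<in> l2 \<Longrightarrow> ip (\<lambda>x. c * f x) g = cnj c * ip f g"
proof -
  assume a: "f \<in> l2" "g \<in> l2"
  have "(\<lambda>x. cnj (c * f x) * g x) = (\<lambda>x. cnj c * (cnj (f x) * g x))" by (auto simp: mult_ac)
  then show ?thesis unfolding ip_def
    using infsum_cmult_right[of "cnj c" "\<lambda>x. cnj (f x) * g x" UNIV] ip_summable[OF a] by simp
qed

lemma ip_cnj: "ip f g = cnj (ip g f)"
  unfolding ip_def infsum_cnj[symmetric] by (simp add: mult.commute)

lemma ip_minus_left: "f \<in> l2 \<Longrightarrow> g \<in> l2 \<Longrightarrow> h \<in> l2 \<Longrightarrow>
   ip (\<lambda>x. f x - g x) h = ip f h - ip g h"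
proof -
  assume a: "f \<in> l2" "g \<in> l2" "h \<in> l2"
  have "ip (\<lambda>x. f x + (-1) * g x) h = ip f h + ip (\<lambda>x. (-1) * g x) h"
    using a by (intro ip_add_left l2_scale)
  also have "ip (\<lambda>x. (-1) * g x) h = cnj (-1) * ip g h" by (rule ip_scale_left[OF a(2,3)])
  finally show ?thesis by simp
qed

lemma ip_minus_right: "f \<in> l2 \<Longrightarrow> g \<in> l2 \<Longrightarrow> h \<in> l2 \<Longrightarrow>
   ip h (\<lambda>x. f x - g x) = ip h f - ip h g"
  by (subst ip_cnj, subst ip_minus_left, auto simp: ip_cnj[of f] ip_cnj[of g])

lemma ip_zero_left[simp]: "ip (\<lambda>x. 0) g = 0" by (simp add: ip_def)
lemma ip_zero_right[simp]: "ip g (\<lambda>x. 0) = 0" by (simp add: ip_def)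

lemma ip_sum_left: assumes "\<And>i. i \<in> A \<Longrightarrow> f i \<in> l2" "g \<in> l2"
  shows "ip (\<lambda>x. \<Sum>i\<in>A. f i x) g = (\<Sum>i\<in>A. ip (f i) g)"
  using assms
proof (induction A rule: infinite_finite_induct)
  case (insert a A) then show ?case by (simp add: ip_add_left l2_sum)
qed auto

lemma ip_sum_right: assumes "\<And>i. i \<in> A \<Longrightarrow> f i \<in> l2" "g \<in> l2"
  shows "ip g (\<lambda>x. \<Sum>i\<in>A. f i x) = (\<Sum>i\<in>A. ip g (f i))"
  using assms
proof (induction A rule: infinite_finite_induct)
  case (insert a A) then show ?case by (simp add: ip_add_right l2_sum)
qed auto

lemma ip_self: assumes "f \<in> l2" shows "ip f f = of_real ((l2norm f)^2)"
proof -
  have e: "(\<lambda>x. cnj (f x) * f x) = (\<lambda>x. of_real ((cmod (f x))^2))"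
    by (rule ext) (metis complex_norm_square mult.commute)
  have "((\<lambda>x. (cmod (f x))^2) has_sum infsum (\<lambda>x. (cmod (f x))^2) UNIV) UNIV"
    by (rule has_sum_infsum[OF l2_sq_summable[OF assms]])
  then have "((\<lambda>x. of_real ((cmod (f x))^2) :: complex) has_sum of_real (infsum (\<lambda>x. (cmod (f x))^2) UNIV)) UNIV"
    by (rule has_sum_of_real)
  then have "ip f f = of_real (infsum (\<lambda>x. (cmod (f x))^2) UNIV)"
    unfolding ip_def e by (simp add: infsumI)
  moreover have "infsum (\<lambda>x. (cmod (f x))^2) UNIV \<ge> 0" by (simp add: infsum_nonneg)
  ultimately show ?thesis by (simp add: l2norm_def)
qed

lemma l2norm_nonneg: "l2norm f \<ge> 0"
  unfolding l2norm_def by (rule real_sqrt_ge_zero, rule infsum_nonneg, simp)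

lemma l2norm_ip: "f \<in> l2 \<Longrightarrow> l2norm f = sqrt (Re (ip f f))"
  by (simp add: ip_self l2norm_nonneg)

lemma l2norm_sq: "f \<in> l2 \<Longrightarrow> (l2norm f)^2 = infsum (\<lambda>x. (cmod (f x))^2) UNIV"
  by (simp add: l2norm_def infsum_nonneg)

lemma l2norm_zero[simp]: "l2norm (\<lambda>x. 0) = 0"
  by (simp add: l2norm_def)

lemma real_amgm_lemma:
  fixes x A B :: real
  assumes "A \<ge> 0" "B \<ge> 0" "\<And>t. t > 0 \<Longrightarrow> x \<le> t * A / 2 + B / (2 * t)"
  shows "x \<le> sqrt A * sqrt B"
proof (cases "A > 0 \<and> B > 0")
  case True
  define t where "t = sqrt B / sqrt A"
  have tp: "t > 0" using True by (simp add: t_def)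
  have "t * A / 2 = sqrt A * sqrt B / 2" using True unfolding t_def
    by (simp add: field_simps)
  moreover have "B / (2 * t) = sqrt A * sqrt B / 2" using True unfolding t_def
    by (simp add: field_simps)
  ultimately show ?thesis using assms(3)[OF tp] by simp
next
  case False
  show ?thesis
  proof (rule ccontr)
    assume "\<not> ?thesis"
    then have xp: "x > 0" using False assms by auto
    show False
    proof (cases "A = 0")
      case True
      define t where "t = (B + 1) / x"
      have tp: "t > 0" using xp assms by (simp add: t_def)
      have "x \<le> B / (2 * t)" using assms(3)[OF tp] True by simp
      also have "\<dots> = B * x / (2 * (B + 1))" using xp assms by (simp add: t_def field_simps)
      also have "\<dots> < x"
      proof -
        have "B * x < x * (2 * (B + 1))"
          using mult_nonneg_nonneg[OF assms(2) less_imp_le[OF xp]] xp by (simp add: algebra_simps)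
        then show ?thesis using assms(2) by (simp add: pos_divide_less_eq)
      qed
      finally show False by simp
    next
      case False
      then have "B = 0" using \<open>\<not> (A > 0 \<and> B > 0)\<close> assms by auto
      define t where "t = x / (A + 1)"
      have tp: "t > 0" using xp assms by (simp add: t_def)
      have "x \<le> t * A / 2" using assms(3)[OF tp] \<open>B = 0\<close> by simp
      also have "\<dots> = x * A / (2 * (A + 1))" using xp assms by (simp add: t_def field_simps)
      also have "\<dots> < x"
      proof -
        have "x * A < x * (2 * (A + 1))"
          using mult_nonneg_nonneg[OF assms(1) less_imp_le[OF xp]] xp by (simp add: algebra_simps)
        then show ?thesis using assms(1) by (simp add: pos_divide_less_eq)
      qed
      finally show False by simp
    qed
  qed
qed

lemma cauchy_schwarz: assumes "f \<in> l2" "g \<in> l2"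
  shows "cmod (ip f g) \<le> l2norm f * l2norm g"
proof -
  let ?A = "infsum (\<lambda>x. (cmod (f x))^2) UNIV" and ?B = "infsum (\<lambda>x. (cmod (g x))^2) UNIV"
  have "cmod (ip f g) \<le> sqrt ?A * sqrt ?B"
  proof (rule real_amgm_lemma)
    show "?A \<ge> 0" "?B \<ge> 0" by (simp_all add: infsum_nonneg)
    fix t :: real assume t: "t > 0"
    have "cmod (ip f g) \<le> infsum (\<lambda>x. norm (cnj (f x) * g x)) UNIV"
      unfolding ip_def using ip_abs_summable[OF assms] by (rule norm_infsum_bound)
    also have "\<dots> \<le> infsum (\<lambda>x. (t / 2) * (cmod (f x))^2 + (1 / (2 * t)) * (cmod (g x))^2) UNIV"
    proof (rule infsum_mono)
      show "(\<lambda>x. norm (cnj (f x) * g x)) summable_on UNIV"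
        using ip_abs_summable[OF assms] by simp
      show "(\<lambda>x. (t / 2) * (cmod (f x))^2 + (1 / (2 * t)) * (cmod (g x))^2) summable_on UNIV"
        using assms by (intro summable_on_add summable_on_cmult_right l2_sq_summable)
      fix x
      have "0 \<le> (t * cmod (f x) - cmod (g x))^2 / (2 * t)" using t by simp
      then have "cmod (f x) * cmod (g x) \<le> (t / 2) * (cmod (f x))^2 + (1 / (2 * t)) * (cmod (g x))^2"
        using t by (simp add: field_simps power2_eq_square)
      then show "norm (cnj (f x) * g x) \<le> (t / 2) * (cmod (f x))^2 + (1 / (2 * t)) * (cmod (g x))^2"
        by (simp add: norm_mult)
    qed
    also have "\<dots> = infsum (\<lambda>x. (t / 2) * (cmod (f x))^2) UNIV + infsum (\<lambda>x. (1 / (2 * t)) * (cmod (g x))^2) UNIV"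
      using assms by (intro infsum_add summable_on_cmult_right l2_sq_summable)
    also have "\<dots> = (t / 2) * ?A + (1 / (2 * t)) * ?B"
      by (simp only: infsum_cmult_right')
    finally show "cmod (ip f g) \<le> t * ?A / 2 + ?B / (2 * t)" by simp
  qed
  then show ?thesis by (simp add: l2norm_def)
qed

lemma l2norm_triangle: assumes "f \<in> l2" "g \<in> l2"
  shows "l2norm (\<lambda>x. f x + g x) \<le> l2norm f + l2norm g"
proof -
  have fg: "(\<lambda>x. f x + g x) \<in> l2" using assms by (rule l2_add)
  have "ip (\<lambda>x. f x + g x) (\<lambda>x. f x + g x) = ip f f + ip f g + (ip g f + ip g g)"
    using assms fg by (simp add: ip_add_left ip_add_right)
  then have "complex_of_real ((l2norm (\<lambda>x. f x + g x))^2) = complex_of_real ((l2norm f)^2) + ip f g + (ip g f + complex_of_real ((l2norm g)^2))"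
    using assms fg by (simp only: ip_self)
  then have "(l2norm (\<lambda>x. f x + g x))^2 = Re (complex_of_real ((l2norm f)^2) + ip f g + (ip g f + complex_of_real ((l2norm g)^2)))"
    by (metis Re_complex_of_real)
  then have "(l2norm (\<lambda>x. f x + g x))^2 = (l2norm f)^2 + (l2norm g)^2 + Re (ip f g) + Re (ip g f)"
    by simp
  also have "\<dots> \<le> (l2norm f)^2 + (l2norm g)^2 + 2 * (l2norm f * l2norm g)"
  proof -
    have "Re (ip f g) \<le> l2norm f * l2norm g"
      using cauchy_schwarz[OF assms] complex_Re_le_cmod order_trans by blast
    moreover have "Re (ip g f) \<le> l2norm f * l2norm g"
      using cauchy_schwarz[OF assms(2,1)] complex_Re_le_cmod order_trans by (metis mult.commute)
    ultimately show ?thesis by simp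
  qed
  also have "\<dots> = (l2norm f + l2norm g)^2" by (simp add: power2_sum)
  finally show ?thesis
    using l2norm_nonneg power2_le_imp_le by (metis add_nonneg_nonneg)
qed

definition lin_op :: "(('a \<Rightarrow> complex) \<Rightarrow> ('a \<Rightarrow> complex)) \<Rightarrow> bool" where
  "lin_op A \<longleftrightarrow> (\<forall>f\<in>l2. A f \<in> l2) \<and>
     (\<forall>f\<in>l2. \<forall>g\<in>l2. A (\<lambda>x. f x + g x) = (\<lambda>x. A f x + A g x)) \<and>
     (\<forall>f\<in>l2. \<forall>c. A (\<lambda>x. c * f x) = (\<lambda>x. c * A f x))"

lemma bounded_lin: "bounded_op A \<Longrightarrow> lin_op A"
  by (simp add: bounded_op_def lin_op_def)

lemma lin_l2: "lin_op A \<Longrightarrow> f \<in> l2 \<Longrightarrow> A f \<in> l2"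
  by (simp add: lin_op_def)

lemma lin_add: "lin_op A \<Longrightarrow> f \<in> l2 \<Longrightarrow> g \<in> l2 \<Longrightarrow> A (\<lambda>x. f x + g x) = (\<lambda>x. A f x + A g x)"
  by (simp add: lin_op_def)

lemma lin_scale: "lin_op A \<Longrightarrow> f \<in> l2 \<Longrightarrow> A (\<lambda>x. c * f x) = (\<lambda>x. c * A f x)"
  by (simp add: lin_op_def)

lemma lin_zero: "lin_op A \<Longrightarrow> A (\<lambda>x. 0) = (\<lambda>x. 0)"
  using lin_scale[of A "\<lambda>x. 0" 0] l2_zero by simp

lemma lin_sum: assumes "lin_op A" "\<And>i. i \<in> F \<Longrightarrow> f i \<in> l2"
  shows "A (\<lambda>x. \<Sum>i\<in>F. f i x) = (\<lambda>x. \<Sum>i\<in>F. A (f i) x)"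
  using assms(2)
proof (induction F rule: infinite_finite_induct)
  case (infinite F) then show ?case using lin_zero[OF assms(1)] by simp
next
  case empty then show ?case using lin_zero[OF assms(1)] by simp
next
  case (insert a F)
  have "A (\<lambda>x. \<Sum>i\<in>insert a F. f i x) = A (\<lambda>x. f a x + (\<Sum>i\<in>F. f i x))"
    using insert by simp
  also have "\<dots> = (\<lambda>x. A (f a) x + A (\<lambda>x. \<Sum>i\<in>F. f i x) x)"
    using insert by (intro lin_add[OF assms(1)] l2_sum) auto
  finally show ?case using insert by simp
qed

lemma lin_minus: assumes "lin_op A" "f \<in> l2" "g \<in> l2"
  shows "A (\<lambda>x. f x - g x) = (\<lambda>x. A f x - A g x)"
proof -
  have "A (\<lambda>x. f x + (-1) * g x) = (\<lambda>x. A f x + A (\<lambda>x. (-1) * g x) x)"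
    using assms by (intro lin_add l2_scale)
  also have "A (\<lambda>x. (-1) * g x) = (\<lambda>x. (-1) * A g x)" using assms by (intro lin_scale)
  finally show ?thesis by simp
qed

lemma lin_comp: "lin_op A \<Longrightarrow> lin_op B \<Longrightarrow> lin_op (A \<circ> B)"
  unfolding lin_op_def by (auto simp: o_def)

lemma lin_id: "lin_op id"
  unfolding lin_op_def by auto

lemma lin_op_sum: fixes A :: "'i \<Rightarrow> ('a \<Rightarrow> complex) \<Rightarrow> ('a \<Rightarrow> complex)"
  assumes "\<And>i. i \<in> F \<Longrightarrow> lin_op (A i)"
  shows "lin_op (\<lambda>f x. \<Sum>i\<in>F. A i f x)"
  unfolding lin_op_def
proof (intro conjI ballI allI)
  fix f :: "'a \<Rightarrow> complex" assume f: "f \<in> l2"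
  then show "(\<lambda>x. \<Sum>i\<in>F. A i f x) \<in> l2" by (intro l2_sum) (simp add: lin_l2 assms)
  fix c
  show "(\<lambda>x. \<Sum>i\<in>F. A i (\<lambda>x. c * f x) x) = (\<lambda>x. c * (\<Sum>i\<in>F. A i f x))"
    using assms f by (simp add: lin_scale sum_distrib_left)
next
  fix f g :: "'a \<Rightarrow> complex" assume f: "f \<in> l2" and g: "g \<in> l2"
  show "(\<lambda>x. \<Sum>i\<in>F. A i (\<lambda>x. f x + g x) x) = (\<lambda>x. (\<Sum>i\<in>F. A i f x) + (\<Sum>i\<in>F. A i g x))"
    using assms f g by (simp add: lin_add sum.distrib)
qed

lemma opw_append: "opw S (K @ L) = opw S K \<circ> opw S L"
  by (induction K) auto

lemma opa_append: "opa Sa (K @ L) = opa Sa L \<circ> opa Sa K"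
  by (induction K) auto

lemma words_Suc: "words N (Suc n) = (\<lambda>(a, K). a # K) ` ({1..N} \<times> words N n)"
  unfolding words_def
  by (auto simp: length_Suc_conv image_iff)

lemma finite_words: "finite (words N n)"
  unfolding words_def using finite_lists_length_eq[of "{1..N}" n] by (simp add: conj_commute)

lemma words_Nil[simp]: "words N 0 = {[]}"
  by (auto simp: words_def)

locale crep =
  fixes N :: nat and S Sa :: "nat \<Rightarrow> ('a \<Rightarrow> complex) \<Rightarrow> ('a \<Rightarrow> complex)"
  assumes rep: "cuntz_rep N S Sa"
begin

lemma S_lin: "a \<in> {1..N} \<Longrightarrow> lin_op (S a)"
  using rep by (auto simp: cuntz_rep_def intro: bounded_lin)

lemma Sa_lin: "a \<in> {1..N} \<Longrightarrow> lin_op (Sa a)"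
  using rep by (auto simp: cuntz_rep_def intro: bounded_lin)

lemma S_adj: "a \<in> {1..N} \<Longrightarrow> f \<in> l2 \<Longrightarrow> g \<in> l2 \<Longrightarrow> ip (S a f) g = ip f (Sa a g)"
  using rep by (auto simp: cuntz_rep_def)

lemma SaS: "i \<in> {1..N} \<Longrightarrow> j \<in> {1..N} \<Longrightarrow> f \<in> l2 \<Longrightarrow> Sa i (S j f) = (if i = j then f else (\<lambda>x. 0))"
  using rep by (auto simp: cuntz_rep_def)

lemma SSa_sum: "f \<in> l2 \<Longrightarrow> (\<lambda>x. \<Sum>i=1..N. S i (Sa i f) x) = f"
  using rep by (auto simp: cuntz_rep_def)

lemma opw_lin: "set K \<subseteq> {1..N} \<Longrightarrow> lin_op (opw S K)"
  by (induction K) (auto simp: lin_id intro!: lin_comp S_lin)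

lemma opa_lin: "set K \<subseteq> {1..N} \<Longrightarrow> lin_op (opa Sa K)"
  by (induction K) (auto simp: lin_id intro!: lin_comp Sa_lin)

lemma opw_l2: "set K \<subseteq> {1..N} \<Longrightarrow> f \<in> l2 \<Longrightarrow> opw S K f \<in> l2"
  using opw_lin lin_l2 by blast

lemma opa_l2: "set K \<subseteq> {1..N} \<Longrightarrow> f \<in> l2 \<Longrightarrow> opa Sa K f \<in> l2"
  using opa_lin lin_l2 by blast

lemma opw_zero: "set K \<subseteq> {1..N} \<Longrightarrow> opw S K (\<lambda>x. 0) = (\<lambda>x. 0)"
  using opw_lin lin_zero by blast

lemma opa_zero: "set K \<subseteq> {1..N} \<Longrightarrow> opa Sa K (\<lambda>x. 0) = (\<lambda>x. 0)"
  using opa_lin lin_zero by blast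

lemma opw_adj: "set K \<subseteq> {1..N} \<Longrightarrow> f \<in> l2 \<Longrightarrow> g \<in> l2 \<Longrightarrow> ip (opw S K f) g = ip f (opa Sa K g)"
proof (induction K arbitrary: g)
  case (Cons a K)
  have "ip (opw S (a # K) f) g = ip (S a (opw S K f)) g" by simp
  also have "\<dots> = ip (opw S K f) (Sa a g)" using Cons by (intro S_adj opw_l2) auto
  also have "\<dots> = ip f (opa Sa K (Sa a g))" using Cons Sa_lin lin_l2 by (intro Cons.IH) auto
  finally show ?case by simp
qed simp

lemma opw_adj2: "set K \<subseteq> {1..N} \<Longrightarrow> f \<in> l2 \<Longrightarrow> g \<in> l2 \<Longrightarrow> ip f (opw S K g) = ip (opa Sa K f) g"
  by (metis ip_cnj opw_adj)

lemma opa_opw_prefix: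
  "set K \<subseteq> {1..N} \<Longrightarrow> set L \<subseteq> {1..N} \<Longrightarrow> length K \<le> length L \<Longrightarrow> f \<in> l2 \<Longrightarrow>
   opa Sa K (opw S L f) = (if K = take (length K) L then opw S (drop (length K) L) f else (\<lambda>x. 0))"
proof (induction K arbitrary: L)
  case (Cons a K)
  then obtain b L' where L: "L = b # L'" by (cases L) auto
  have "opa Sa (a # K) (opw S L f) = opa Sa K (Sa a (S b (opw S L' f)))" using L by simp
  have l: "opw S L' f \<in> l2" using Cons.prems L by (intro opw_l2) auto
  have "opa Sa (a # K) (opw S L f) = opa Sa K (Sa a (S b (opw S L' f)))" using L by simp
  also have "\<dots> = opa Sa K (if a = b then opw S L' f else (\<lambda>x. 0))"
    using Cons.prems L by (subst SaS[OF _ _ l]) auto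
  also have "\<dots> = (if a # K = take (length (a # K)) L then opw S (drop (length (a # K)) L) f else (\<lambda>x. 0))"
    using Cons L by (auto simp: opa_zero)
  finally show ?case .
qed simp

lemma opa_opw_eq:
  "set K \<subseteq> {1..N} \<Longrightarrow> set L \<subseteq> {1..N} \<Longrightarrow> length K = length L \<Longrightarrow> f \<in> l2 \<Longrightarrow>
   opa Sa K (opw S L f) = (if K = L then f else (\<lambda>x. 0))"
  by (subst opa_opw_prefix) auto

lemma opa_opw_same: "set K \<subseteq> {1..N} \<Longrightarrow> f \<in> l2 \<Longrightarrow> opa Sa K (opw S K f) = f"
  by (subst opa_opw_eq) auto

lemma ip_opw_same: "set K \<subseteq> {1..N} \<Longrightarrow> set L \<subseteq> {1..N} \<Longrightarrow> length K = length L \<Longrightarrow> f \<in> l2 \<Longrightarrow> g \<in> l2 \<Longrightarrow>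
   ip (opw S K f) (opw S L g) = (if K = L then ip f g else 0)"
  by (simp add: opw_adj opw_l2 opa_opw_eq)

lemma sum_words: "f \<in> l2 \<Longrightarrow> (\<lambda>x. \<Sum>K\<in>words N n. opw S K (opa Sa K f) x) = f"
proof (induction n arbitrary: f)
  case 0 then show ?case by simp
next
  case (Suc n)
  have inj: "inj_on (\<lambda>(a, K). a # K) ({1..N} \<times> words N n)" by (auto simp: inj_on_def)
  have "(\<lambda>x. \<Sum>K\<in>words N (Suc n). opw S K (opa Sa K f) x)
      = (\<lambda>x. \<Sum>(a,K)\<in>{1..N} \<times> words N n. S a (opw S K (opa Sa K (Sa a f))) x)"
    unfolding words_Suc by (subst sum.reindex[OF inj]) (simp add: case_prod_unfold)
  also have "\<dots> = (\<lambda>x. \<Sum>a\<in>{1..N}. \<Sum>K\<in>words N n. S a (opw S K (opa Sa K (Sa a f))) x)"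
    by (simp add: sum.cartesian_product)
  also have "\<dots> = (\<lambda>x. \<Sum>a\<in>{1..N}. S a (\<lambda>y. \<Sum>K\<in>words N n. opw S K (opa Sa K (Sa a f)) y) x)"
  proof -
    have "\<And>a. a \<in> {1..N} \<Longrightarrow> S a (\<lambda>y. \<Sum>K\<in>words N n. opw S K (opa Sa K (Sa a f)) y)
       = (\<lambda>y. \<Sum>K\<in>words N n. S a (opw S K (opa Sa K (Sa a f))) y)"
      using Suc.prems by (intro lin_sum S_lin opw_l2 opa_l2 lin_l2[OF Sa_lin]) (auto simp: words_def)
    then show ?thesis by simp
  qed
  also have "\<dots> = (\<lambda>x. \<Sum>a\<in>{1..N}. S a (Sa a f) x)"
    using Suc by (simp add: lin_l2[OF Sa_lin])
  also have "\<dots> = f" using Suc.prems by (rule SSa_sum)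
  finally show ?case .
qed

lemma l2norm_opw: "set K \<subseteq> {1..N} \<Longrightarrow> f \<in> l2 \<Longrightarrow> l2norm (opw S K f) = l2norm f"
  by (simp add: l2norm_ip opw_l2 ip_opw_same)

end

declare One_nat_def [simp del]

lemma bounded_opI: "lin_op A \<Longrightarrow> (\<And>f. f \<in> l2 \<Longrightarrow> l2norm (A f) \<le> C * l2norm f) \<Longrightarrow> bounded_op A"
  unfolding bounded_op_def lin_op_def by blast

lemma bounded_bound: "bounded_op A \<Longrightarrow> \<exists>C. \<forall>f\<in>l2. l2norm (A f) \<le> C * l2norm f"
  unfolding bounded_op_def by blast

locale crep_perm = crep +
  fixes l :: nat and \<sigma> :: "nat list \<Rightarrow> nat list"
  assumes perm: "\<sigma> permutes words N l"
begin

abbreviation "W \<equiv> words N l"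
abbreviation "U \<equiv> u_op N l \<sigma> S Sa"
abbreviation "Ua \<equiv> u_adj_op N l \<sigma> S Sa"

lemma W_set: "K \<in> words N n \<Longrightarrow> set K \<subseteq> {1..N}"
  by (simp add: words_def)

lemma sigma_W: "K \<in> W \<Longrightarrow> \<sigma> K \<in> W"
  using permutes_in_image[OF perm] by blast

lemma sigma_W_set: "K \<in> W \<Longrightarrow> set (\<sigma> K) \<subseteq> {1..N}"
  using sigma_W W_set by blast

lemma inv_sigma_W: "K \<in> W \<Longrightarrow> inv \<sigma> K \<in> W"
  using permutes_in_image[OF permutes_inv[OF perm]] by blast

lemma sigma_inv1: "\<sigma> (inv \<sigma> K) = K" using permutes_inverses(1)[OF perm] .
lemma sigma_inv2: "inv \<sigma> (\<sigma> K) = K" using permutes_inverses(2)[OF perm] .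

lemma U_eq: "U = (\<lambda>f x. \<Sum>K\<in>W. (opw S (\<sigma> K) \<circ> opa Sa K) f x)"
  by (rule ext) (simp add: u_op_def)

lemma Ua_eq: "Ua = (\<lambda>f x. \<Sum>K\<in>W. (opw S K \<circ> opa Sa (\<sigma> K)) f x)"
  by (rule ext) (simp add: u_adj_op_def)

lemma U_lin: "lin_op U"
  unfolding U_eq by (rule lin_op_sum) (intro lin_comp opw_lin opa_lin; simp add: W_set sigma_W_set)

lemma Ua_lin: "lin_op Ua"
  unfolding Ua_eq by (rule lin_op_sum) (intro lin_comp opw_lin opa_lin; simp add: W_set sigma_W_set)

lemma U_l2: "f \<in> l2 \<Longrightarrow> U f \<in> l2" using U_lin lin_l2 by blast
lemma Ua_l2: "f \<in> l2 \<Longrightarrow> Ua f \<in> l2" using Ua_lin lin_l2 by blast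

lemma W_len: "K \<in> words N n \<Longrightarrow> length K = n"
  by (simp add: words_def)

lemma U_opw: assumes "K \<in> W" "g \<in> l2" shows "U (opw S K g) = opw S (\<sigma> K) g"
proof -
  have "\<And>K' x. K' \<in> W \<Longrightarrow> opw S (\<sigma> K') (opa Sa K' (opw S K g)) x = (if K' = K then opw S (\<sigma> K) g x else 0)"
  proof -
    fix K' x assume K': "K' \<in> W"
    show "opw S (\<sigma> K') (opa Sa K' (opw S K g)) x = (if K' = K then opw S (\<sigma> K) g x else 0)"
    proof (cases "K' = K")
      case True then show ?thesis using assms by (simp add: opa_opw_same W_set)
    next
      case False
      have "opa Sa K' (opw S K g) = (\<lambda>x. 0)"
        using False assms K' by (simp add: opa_opw_eq W_set W_len)
      then show ?thesis using False opw_zero[OF sigma_W_set[OF K']] by simp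
    qed
  qed
  then have "U (opw S K g) = (\<lambda>x. \<Sum>K'\<in>W. (if K' = K then opw S (\<sigma> K) g x else 0))"
    by (simp add: u_op_def)
  also have "\<dots> = opw S (\<sigma> K) g" using assms finite_words by (simp add: sum.delta')
  finally show ?thesis .
qed

lemma Ua_opw: assumes "K \<in> W" "g \<in> l2" shows "Ua (opw S K g) = opw S (inv \<sigma> K) g"
proof -
  have "\<And>K' x. K' \<in> W \<Longrightarrow> opw S K' (opa Sa (\<sigma> K') (opw S K g)) x = (if K' = inv \<sigma> K then opw S (inv \<sigma> K) g x else 0)"
  proof -
    fix K' x assume K': "K' \<in> W"
    have e: "(\<sigma> K' = K) = (K' = inv \<sigma> K)" using sigma_inv1 sigma_inv2 by metis
    show "opw S K' (opa Sa (\<sigma> K') (opw S K g)) x = (if K' = inv \<sigma> K then opw S (inv \<sigma> K) g x else 0)"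
    proof (cases "K' = inv \<sigma> K")
      case True then show ?thesis using assms sigma_inv1 by (simp add: opa_opw_same W_set)
    next
      case False
      have "opa Sa (\<sigma> K') (opw S K g) = (\<lambda>x. 0)"
        using False e assms K' sigma_W[OF K'] by (simp add: opa_opw_eq W_set W_len)
      then show ?thesis using False opw_zero[OF W_set[OF K']] by simp
    qed
  qed
  then have "Ua (opw S K g) = (\<lambda>x. \<Sum>K'\<in>W. (if K' = inv \<sigma> K then opw S (inv \<sigma> K) g x else 0))"
    by (simp add: u_adj_op_def)
  also have "\<dots> = opw S (inv \<sigma> K) g" using assms finite_words inv_sigma_W by (simp add: sum.delta')
  finally show ?thesis .
qed

lemma UaU: assumes "f \<in> l2" shows "Ua (U f) = f"
proof -
  have "Ua (U f) = (\<lambda>x. \<Sum>K\<in>W. Ua (opw S (\<sigma> K) (opa Sa K f)) x)"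
    unfolding u_op_def using assms
    by (intro lin_sum[OF Ua_lin]) (simp add: opw_l2 opa_l2 W_set sigma_W_set)
  also have "\<dots> = (\<lambda>x. \<Sum>K\<in>W. opw S K (opa Sa K f) x)"
    using assms by (simp add: Ua_opw sigma_W opa_l2 W_set sigma_inv2)
  also have "\<dots> = f" using assms by (rule sum_words)
  finally show ?thesis .
qed

lemma UUa: assumes "f \<in> l2" shows "U (Ua f) = f"
proof -
  have "U (Ua f) = (\<lambda>x. \<Sum>K\<in>W. U (opw S K (opa Sa (\<sigma> K) f)) x)"
    unfolding u_adj_op_def using assms
    by (intro lin_sum[OF U_lin]) (simp add: opw_l2 opa_l2 W_set sigma_W_set)
  also have "\<dots> = (\<lambda>x. \<Sum>K\<in>W. opw S (\<sigma> K) (opa Sa (\<sigma> K) f) x)"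
    using assms by (simp add: U_opw sigma_W opa_l2 sigma_W_set)
  also have "\<dots> = (\<lambda>x. \<Sum>K\<in>\<sigma> ` W. opw S K (opa Sa K f) x)"
    using permutes_inj_on[OF perm] by (simp add: sum.reindex)
  also have "\<dots> = (\<lambda>x. \<Sum>K\<in>W. opw S K (opa Sa K f) x)"
    by (simp add: permutes_image[OF perm])
  also have "\<dots> = f" using assms by (rule sum_words)
  finally show ?thesis .
qed

lemma U_adj: assumes "f \<in> l2" "g \<in> l2" shows "ip (U f) g = ip f (Ua g)"
proof -
  have "ip (U f) g = (\<Sum>K\<in>W. ip (opw S (\<sigma> K) (opa Sa K f)) g)"
    unfolding u_op_def using assms
    by (intro ip_sum_left) (simp_all add: opw_l2 opa_l2 W_set sigma_W_set)
  also have "\<dots> = (\<Sum>K\<in>W. ip (opa Sa K f) (opa Sa (\<sigma> K) g))"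
    using assms by (intro sum.cong refl opw_adj) (simp_all add: opa_l2 W_set sigma_W_set)
  also have "\<dots> = (\<Sum>K\<in>W. ip f (opw S K (opa Sa (\<sigma> K) g)))"
    using assms by (intro sum.cong refl opw_adj2[symmetric]) (simp_all add: opa_l2 W_set sigma_W_set)
  also have "\<dots> = ip f (Ua g)"
    unfolding u_adj_op_def using assms
    by (intro ip_sum_right[symmetric]) (simp_all add: opw_l2 opa_l2 W_set sigma_W_set)
  finally show ?thesis .
qed

lemma Ua_adj: assumes "f \<in> l2" "g \<in> l2" shows "ip (Ua f) g = ip f (U g)"
  using U_adj[OF assms(2,1)] by (metis ip_cnj)

lemma U_norm: assumes "f \<in> l2" shows "l2norm (U f) = l2norm f"
proof -
  have "ip (U f) (U f) = ip f f" using assms U_adj[OF assms U_l2[OF assms]] UaU[OF assms] by simp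
  then show ?thesis using l2norm_ip[OF assms] l2norm_ip[OF U_l2[OF assms]] by simp
qed

lemma Ua_norm: assumes "f \<in> l2" shows "l2norm (Ua f) = l2norm f"
proof -
  have "ip (Ua f) (Ua f) = ip f f" using assms Ua_adj[OF assms Ua_l2[OF assms]] UUa[OF assms] by simp
  then show ?thesis using l2norm_ip[OF assms] l2norm_ip[OF Ua_l2[OF assms]] by simp
qed

lemma T_cuntz: "cuntz_rep N (comp_psi_S N l \<sigma> S Sa) (comp_psi_Sa N l \<sigma> S Sa)"
proof -
  have A: "bounded_op (U \<circ> S i) \<and> bounded_op (Sa i \<circ> Ua) \<and>
        (\<forall>f\<in>l2. \<forall>g\<in>l2. ip ((U \<circ> S i) f) g = ip f ((Sa i \<circ> Ua) g))" if i: "i \<in> {1..N}" for i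
  proof (intro conjI)
    have b1: "bounded_op (S i)" and b2: "bounded_op (Sa i)" using rep i by (simp_all add: cuntz_rep_def)
    obtain C where C: "\<forall>f\<in>l2. l2norm (S i f) \<le> C * l2norm f"
      using bounded_bound[OF b1] by blast
    obtain C' where C': "\<forall>f\<in>l2. l2norm (Sa i f) \<le> C' * l2norm f"
      using bounded_bound[OF b2] by blast
    show "bounded_op (U \<circ> S i)"
    proof (rule bounded_opI[of _ C])
      show "lin_op (U \<circ> S i)" by (intro lin_comp S_lin i U_lin)
      fix f :: "'a \<Rightarrow> complex" assume f: "f \<in> l2"
      have "l2norm (S i f) \<le> C * l2norm f" using C f by blast
      then show "l2norm ((U \<circ> S i) f) \<le> C * l2norm f" using f by (simp add: U_norm lin_l2[OF S_lin[OF i]])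
    qed
    show "bounded_op (Sa i \<circ> Ua)"
    proof (rule bounded_opI[of _ C'])
      show "lin_op (Sa i \<circ> Ua)" by (intro lin_comp Sa_lin i Ua_lin)
      fix f :: "'a \<Rightarrow> complex" assume f: "f \<in> l2"
      have "l2norm (Sa i (Ua f)) \<le> C' * l2norm (Ua f)" using Ua_l2[OF f] C' by blast
      then show "l2norm ((Sa i \<circ> Ua) f) \<le> C' * l2norm f" using f by (simp add: Ua_norm)
    qed
    show "\<forall>f\<in>l2. \<forall>g\<in>l2. ip ((U \<circ> S i) f) g = ip f ((Sa i \<circ> Ua) g)"
      using i by (auto simp: U_adj S_adj lin_l2[OF S_lin[OF i]] Ua_l2)
  qed
  have B: "(Sa i \<circ> Ua) ((U \<circ> S j) f) = (if i = j then f else (\<lambda>x. 0))"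
    if i: "i \<in> {1..N}" and j: "j \<in> {1..N}" and f: "f \<in> l2" for i j f
    using i j f by (simp add: UaU lin_l2[OF S_lin[OF j]] SaS)
  have C: "f = (\<lambda>x. \<Sum>i = 1..N. (U \<circ> S i) ((Sa i \<circ> Ua) f) x)" if f: "f \<in> l2" for f
  proof -
    have "(\<lambda>x. \<Sum>i = 1..N. (U \<circ> S i) ((Sa i \<circ> Ua) f) x) = (\<lambda>x. \<Sum>i = 1..N. U (S i (Sa i (Ua f))) x)"
      by simp
    also have "\<dots> = U (\<lambda>x. \<Sum>i = 1..N. S i (Sa i (Ua f)) x)"
      using f by (intro lin_sum[OF U_lin, symmetric]) (simp add: lin_l2[OF S_lin] lin_l2[OF Sa_lin] Ua_l2)
    also have "\<dots> = U (Ua f)" using SSa_sum[OF Ua_l2[OF f]] by simp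
    also have "\<dots> = f" using f by (rule UUa)
    finally show ?thesis by simp
  qed
  show ?thesis unfolding cuntz_rep_def comp_psi_S_def comp_psi_Sa_def
    using A B C by blast
qed

end

declare One_nat_def [simp del]

lemma wpow_0[simp]: "wpow J 0 = []" by (simp add: wpow_def)
lemma wpow_Suc: "wpow J (Suc n) = J @ wpow J n" by (simp add: wpow_def)
lemma wpow_add: "wpow J (a + b) = wpow J a @ wpow J b" by (simp add: wpow_def replicate_add)
lemma wpow_Suc': "wpow J (Suc n) = wpow J n @ J"
  using wpow_add[of J n 1] by (simp add: wpow_def One_nat_def)
lemma wpow_len[simp]: "length (wpow J n) = n * length J"
  by (induction n) (auto simp: wpow_Suc)
lemma wpow_set: "set (wpow J n) \<subseteq> set J"
  by (induction n) (auto simp: wpow_Suc)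
lemma wpow_1[simp]: "wpow J 1 = J" by (simp add: wpow_def One_nat_def)

lemma wpow_take_drop:
  assumes "a < r" "b < length J"
  shows "take (a * length J + b) (wpow J r) = wpow J a @ take b J"
    and "drop (a * length J + b) (wpow J r) = drop b J @ wpow J (r - Suc a)"
proof -
  have r: "wpow J r = wpow J a @ J @ wpow J (r - Suc a)"
    using assms wpow_add[of J a "Suc (r - Suc a)"] by (simp add: wpow_Suc)
  show "take (a * length J + b) (wpow J r) = wpow J a @ take b J"
    unfolding r using assms by simp
  show "drop (a * length J + b) (wpow J r) = drop b J @ wpow J (r - Suc a)"
    unfolding r using assms by simp
qed

lemma delta_w_append: "delta_w \<sigma> q (u @ v) = delta_w \<sigma> (delta_w \<sigma> q u) v"
  by (induction u arbitrary: q) auto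

lemma lambda_w_append: "lambda_w \<sigma> q (u @ v) = lambda_w \<sigma> q u @ lambda_w \<sigma> (delta_w \<sigma> q u) v"
  by (induction u arbitrary: q) auto

lemma lambda_w_len[simp]: "length (lambda_w \<sigma> q w) = length w"
  by (induction w arbitrary: q) auto

lemma lambda_w_drop: "drop m (lambda_w \<sigma> q w) = lambda_w \<sigma> (delta_w \<sigma> q (take m w)) (drop m w)"
proof -
  have "lambda_w \<sigma> q w = lambda_w \<sigma> q (take m w) @ lambda_w \<sigma> (delta_w \<sigma> q (take m w)) (drop m w)"
    by (metis append_take_drop_id lambda_w_append)
  then show ?thesis
    by (metis append_eq_conv_conj lambda_w_len length_take min_def drop_all
        length_drop lambda_w_len diff_is_0_eq' nat_le_linear take_all)
qed

locale mealy =
  fixes N l :: nat and \<sigma> :: "nat list \<Rightarrow> nat list" and J :: "nat list"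
  assumes perm: "\<sigma> permutes words N l" and l1: "l \<ge> 1"
    and J1: "length J \<ge> 1" and Jset: "set J \<subseteq> {1..N}"
begin

abbreviation "Q \<equiv> words N (l - 1)"
abbreviation "\<delta> \<equiv> delta_w \<sigma>"
abbreviation "lw \<equiv> lambda_w \<sigma>"
abbreviation "orb \<equiv> orbit_state \<sigma> J"
definition "C = card Q"

lemma N1: "N \<ge> 1" using J1 Jset by (cases J) auto

lemma Q_finite: "finite Q" by (rule finite_words)

lemma Q_ne: "replicate (l - 1) 1 \<in> Q" using N1 by (auto simp: words_def set_replicate_conv_if)

lemma C_pos: "C \<ge> 1"
  using Q_ne Q_finite card_0_eq unfolding C_def by (metis empty_iff less_one not_le)

lemma inv_in: "q \<in> Q \<Longrightarrow> c \<in> {1..N} \<Longrightarrow> inv \<sigma> (q @ [c]) \<in> words N l"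
proof -
  assume "q \<in> Q" "c \<in> {1..N}"
  then have "q @ [c] \<in> words N l" using l1 by (auto simp: words_def)
  then show ?thesis using permutes_in_image[OF permutes_inv[OF perm]] by blast
qed

lemma md_Q: "q \<in> Q \<Longrightarrow> c \<in> {1..N} \<Longrightarrow> mealy_delta \<sigma> q c \<in> Q"
proof -
  assume a: "q \<in> Q" "c \<in> {1..N}"
  define L where "L = inv \<sigma> (q @ [c])"
  have L: "length L = l" "set L \<subseteq> {1..N}" using inv_in[OF a] by (auto simp: L_def words_def)
  then have ne: "L \<noteq> []" using l1 by auto
  have "set (tl L) \<subseteq> set L" using ne by (cases L) auto
  then show ?thesis using L unfolding mealy_delta_def L_def[symmetric] words_def by auto
qed

lemma hd_tl_inv: "q \<in> Q \<Longrightarrow> c \<in> {1..N} \<Longrightarrow> mealy_lambda \<sigma> q c # mealy_delta \<sigma> q c = inv \<sigma> (q @ [c])"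
  using inv_in[of q c] l1 unfolding mealy_lambda_def mealy_delta_def words_def
  by (cases "inv \<sigma> (q @ [c])") auto

lemma ml_N: "q \<in> Q \<Longrightarrow> c \<in> {1..N} \<Longrightarrow> mealy_lambda \<sigma> q c \<in> {1..N}"
  using inv_in[of q c] hd_tl_inv[of q c] unfolding words_def
  by (metis (no_types, lifting) list.set_intros(1) mem_Collect_eq subsetD)

lemma sigma_ml: "q \<in> Q \<Longrightarrow> c \<in> {1..N} \<Longrightarrow> \<sigma> (mealy_lambda \<sigma> q c # mealy_delta \<sigma> q c) = q @ [c]"
  by (simp add: hd_tl_inv permutes_inverses(1)[OF perm])

lemma delta_Q: "q \<in> Q \<Longrightarrow> set w \<subseteq> {1..N} \<Longrightarrow> \<delta> q w \<in> Q"
  by (induction w arbitrary: q) (auto simp: md_Q)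

lemma lambda_set: "q \<in> Q \<Longrightarrow> set w \<subseteq> {1..N} \<Longrightarrow> set (lw q w) \<subseteq> {1..N}"
proof (induction w arbitrary: q)
  case (Cons a w)
  have "set (lw (mealy_delta \<sigma> q a) w) \<subseteq> {1..N}" using Cons md_Q[of q a] by simp
  then show ?case using ml_N[of q a] Cons.prems by simp
qed simp

lemma wpow_N: "set (wpow J n) \<subseteq> {1..N}" using wpow_set Jset by blast

definition "B q n = \<delta> q (wpow J n)"

lemma B_add: "B q (m + n) = B (B q m) n"
  by (simp add: B_def wpow_add delta_w_append)

lemma B_Q: "q \<in> Q \<Longrightarrow> B q n \<in> Q"
  by (simp add: B_def delta_Q wpow_N)

lemma orb_B: "orb q = {B q n | n. n \<ge> 1}"
  by (auto simp: orbit_state_def B_def)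

lemma periodicI: "q \<in> Q \<Longrightarrow> n \<ge> 1 \<Longrightarrow> B q n = q \<Longrightarrow> q \<in> periodic_states N l \<sigma> J"
  by (auto simp: periodic_states_def B_def)

context
  fixes p assumes pp: "p \<in> periodic_states N l \<sigma> J"
begin

definition "P = (LEAST n. n \<ge> 1 \<and> B p n = p)"

lemma P_ex: "\<exists>n. n \<ge> 1 \<and> B p n = p" using pp by (auto simp: periodic_states_def B_def)

lemma P1: "P \<ge> 1" and BP: "B p P = p"
  using LeastI_ex[OF P_ex] unfolding P_def by auto

lemma P_min: "1 \<le> n \<Longrightarrow> n < P \<Longrightarrow> B p n \<noteq> p"
  using not_less_Least unfolding P_def by blast

lemma p_Q: "p \<in> Q" using pp by (simp add: periodic_states_def)

lemma B_per: "B p (n + j * P) = B p n"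
proof (induction j)
  case (Suc j)
  have "B p (n + Suc j * P) = B p (P + (n + j * P))" by (simp add: algebra_simps)
  also have "\<dots> = B p (n + j * P)" by (simp add: B_add BP)
  finally show ?case using Suc by simp
qed simp

lemma B_mod: "B p n = B p (n mod P)"
  using B_per[of "n mod P" "n div P"] by simp

lemma B_inj: assumes "1 \<le> x" "x < y" "y \<le> P" shows "B p x \<noteq> B p y"
proof
  assume e: "B p x = B p y"
  have "B p (x + (P - y)) = B (B p x) (P - y)" by (simp add: B_add)
  also have "\<dots> = B (B p y) (P - y)" using e by simp
  also have "\<dots> = B p P" using assms by (simp add: B_add[symmetric])
  finally have "B p (x + (P - y)) = p" using BP by simp
  moreover have "1 \<le> x + (P - y)" "x + (P - y) < P" using assms by auto
  ultimately show False using P_min by blast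
qed

lemma orb_eq: "orb p = B p ` {1..P}"
proof
  show "orb p \<subseteq> B p ` {1..P}"
  proof
    fix q assume "q \<in> orb p"
    then obtain n where n: "n \<ge> 1" "q = B p n" by (auto simp: orb_B)
    show "q \<in> B p ` {1..P}"
    proof (cases "n mod P = 0")
      case True
      then have "q = B p P" using n B_mod[of n] BP by (simp add: B_def)
      then show ?thesis using P1 by auto
    next
      case False
      then have "n mod P \<in> {1..P}" using P1 by (simp add: Suc_leI less_imp_le)
      then show ?thesis using n B_mod by blast
    qed
  qed
  show "B p ` {1..P} \<subseteq> orb p" by (auto simp: orb_B)
qed

lemma card_orb: "card (orb p) = P"
proof -
  have "inj_on (B p) {1..P}"
    unfolding inj_on_def by (metis B_inj atLeastAtMost_iff linorder_neqE_nat)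
  then show ?thesis unfolding orb_eq by (simp add: card_image)
qed

lemma p_orb: "p \<in> orb p" unfolding orb_B using P1 BP by (metis (mono_tags, lifting) mem_Collect_eq)

lemma orb_B_eq: assumes "m \<ge> 1" shows "orb (B p m) = orb p"
proof
  show "orb (B p m) \<subseteq> orb p" using assms by (auto simp: orb_B B_add[symmetric])
  show "orb p \<subseteq> orb (B p m)"
  proof
    fix q assume "q \<in> orb p"
    then obtain x where x: "x \<ge> 1" "q = B p x" by (auto simp: orb_B)
    have "m \<le> m * P" using P1 by simp
    then have j: "x + m * P - m \<ge> 1" using x by linarith
    have "B (B p m) (x + m * P - m) = B p (m + (x + m * P - m))" by (simp add: B_add)
    also have "m + (x + m * P - m) = x + m * P" using \<open>m \<le> m * P\<close> by linarith
    also have "B p (x + m * P) = q" using x B_per by simp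
    finally show "q \<in> orb (B p m)" using j by (auto simp: orb_B)
  qed
qed

lemma orb_mem_eq: assumes "q \<in> orb p" shows "orb q = orb p"
proof -
  obtain n where "n \<ge> 1" "q = B p n" using assms by (auto simp: orb_B)
  then show ?thesis using orb_B_eq by simp
qed

end

lemma eventually_periodic: assumes "q \<in> Q" shows "B q C \<in> periodic_states N l \<sigma> J"
proof -
  have "\<not> inj_on (B q) {0..C}"
  proof
    assume "inj_on (B q) {0..C}"
    moreover have "B q ` {0..C} \<subseteq> Q" using assms B_Q by auto
    ultimately have "card {0..C} \<le> card Q" using card_inj_on_le Q_finite by blast
    then show False by (simp add: C_def)
  qed
  then obtain a b where ab: "a < b" "b \<le> C" "B q a = B q b"
    unfolding inj_on_def by (metis atLeastAtMost_iff linorder_neqE_nat zero_le)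
  have e1: "C + (b - a) = b + (C - a)" and e2: "a + (C - a) = C" using ab by auto
  have "B (B q C) (b - a) = B q (C + (b - a))" by (simp add: B_add)
  also have "\<dots> = B (B q b) (C - a)" unfolding e1 by (rule B_add)
  also have "\<dots> = B (B q a) (C - a)" using ab by simp
  also have "\<dots> = B q C" using B_add[of q a "C - a"] e2 by simp
  finally have "B (B q C) (b - a) = B q C" .
  then show ?thesis using ab by (intro periodicI B_Q assms) auto
qed

end

declare One_nat_def [simp del]

lemma mono_op_append: "mono_op S Sa (u @ v) = mono_op S Sa u \<circ> mono_op S Sa v"
  by (induction u rule: list.induct) (auto simp: case_prod_unfold)

lemma opw_mono: "opw S y = mono_op S Sa (map (Pair True) y)"
  by (induction y) auto

lemma opa_mono: "opa Sa z = mono_op S Sa (map (Pair False) (rev z))"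
  by (induction z) (auto simp: mono_op_append)

locale main = crep_perm N S Sa l \<sigma> + mealy N l \<sigma> J
  for N S Sa l \<sigma> J +
  fixes \<Omega> assumes PJ: "PJ_vector S J \<Omega>"
begin

abbreviation "T \<equiv> comp_psi_S N l \<sigma> S Sa"
abbreviation "Ta \<equiv> comp_psi_Sa N l \<sigma> S Sa"

sublocale Tr: crep N T Ta by unfold_locales (rule T_cuntz)

abbreviation "k \<equiv> length J"
definition "Om b = opw S (drop b J) \<Omega>"

lemma Om_l2: "\<Omega> \<in> l2" using PJ by (simp add: PJ_vector_def)
lemma Om_norm: "l2norm \<Omega> = 1" using PJ by (simp add: PJ_vector_def)
lemma Om_fix: "opw S J \<Omega> = \<Omega>" using PJ by (simp add: PJ_vector_def)
lemma Om_on: "b < k \<Longrightarrow> b' < k \<Longrightarrow> ip (Om b) (Om b') = (if b = b' then 1 else 0)"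
  using PJ by (simp add: PJ_vector_def Om_def)

lemma opw_wpow: "opw S (wpow J n) \<Omega> = \<Omega>"
  by (induction n) (auto simp: wpow_Suc opw_append Om_fix)

lemma Jset': "set (drop b J) \<subseteq> {1..N}" using Jset by (meson order_trans set_drop_subset)

lemma Om_l2': "Om b \<in> l2" unfolding Om_def using Jset' Om_l2 by (rule opw_l2)

lemma T_app: "T a = U \<circ> S a" by (simp add: comp_psi_S_def)
lemma Ta_app: "Ta a = Sa a \<circ> Ua" by (simp add: comp_psi_Sa_def)

lemma Q_set: "q \<in> Q \<Longrightarrow> set q \<subseteq> {1..N}" by (simp add: words_def)
lemma Q_len: "q \<in> Q \<Longrightarrow> length q = l - 1" by (simp add: words_def)

lemma M1: assumes "q \<in> Q" "a \<in> {1..N}" "g \<in> l2"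
  shows "T a (opw S q g) = opw S (\<sigma> (a # q)) g"
proof -
  have "a # q \<in> W" using assms l1 by (auto simp: words_def)
  then show ?thesis using assms by (simp add: T_app U_opw[symmetric])
qed

lemma M2: assumes "q \<in> Q" "c \<in> {1..N}" "g \<in> l2"
  shows "T (mealy_lambda \<sigma> q c) (opw S (mealy_delta \<sigma> q c) g) = opw S q (S c g)"
  using M1[OF md_Q[OF assms(1,2)] ml_N[OF assms(1,2)] assms(3)] sigma_ml[OF assms(1,2)]
  by (simp add: opw_append)

lemma M3: "q \<in> Q \<Longrightarrow> set w \<subseteq> {1..N} \<Longrightarrow> g \<in> l2 \<Longrightarrow>
   opw T (lw q w) (opw S (\<delta> q w) g) = opw S q (opw S w g)"
proof (induction w arbitrary: q)
  case (Cons c w)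
  have c: "c \<in> {1..N}" and w: "set w \<subseteq> {1..N}" using Cons.prems by auto
  have "opw T (lw q (c # w)) (opw S (\<delta> q (c # w)) g)
      = T (mealy_lambda \<sigma> q c) (opw T (lw (mealy_delta \<sigma> q c) w) (opw S (\<delta> (mealy_delta \<sigma> q c) w) g))"
    by simp
  also have "\<dots> = T (mealy_lambda \<sigma> q c) (opw S (mealy_delta \<sigma> q c) (opw S w g))"
    using Cons.IH[OF md_Q[OF Cons.prems(1) c] w Cons.prems(3)] by simp
  also have "\<dots> = opw S q (S c (opw S w g))"
    using M2[OF Cons.prems(1) c] opw_l2[OF w Cons.prems(3)] by simp
  finally show ?case by simp
qed simp

lemma M4: assumes "q \<in> Q" "c \<in> {1..N}" "a \<in> {1..N}" "g \<in> l2"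
  shows "Ta a (opw S (q @ [c]) g) = (if a = mealy_lambda \<sigma> q c then opw S (mealy_delta \<sigma> q c) g else (\<lambda>x. 0))"
proof -
  have qc: "q @ [c] \<in> W" using assms l1 by (auto simp: words_def)
  have "Ta a (opw S (q @ [c]) g) = Sa a (opw S (inv \<sigma> (q @ [c])) g)"
    using Ua_opw[OF qc assms(4)] by (simp add: Ta_app)
  also have "\<dots> = Sa a (S (mealy_lambda \<sigma> q c) (opw S (mealy_delta \<sigma> q c) g))"
    using hd_tl_inv[OF assms(1,2)] by (metis opw.simps(2) comp_apply)
  also have "\<dots> = (if a = mealy_lambda \<sigma> q c then opw S (mealy_delta \<sigma> q c) g else (\<lambda>x. 0))"
    using assms by (intro SaS ml_N opw_l2 md_Q Q_set) auto
  finally show ?thesis .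
qed

definition "cls K = orb (\<delta> (take (l - 1) K) (drop (l - 1) K @ wpow J C))"

definition "Vset Ob = {opw S K \<Omega> | K. set K \<subseteq> {1..N} \<and> length K \<ge> l - 1 \<and> cls K = Ob}"

lemma take_Q: "set K \<subseteq> {1..N} \<Longrightarrow> length K \<ge> l - 1 \<Longrightarrow> take (l - 1) K \<in> Q"
  by (auto simp: words_def dest: in_set_takeD)

lemma drop_set: "set K \<subseteq> {1..N} \<Longrightarrow> set (drop n K) \<subseteq> {1..N}"
  by (meson order_trans set_drop_subset)

lemma cls_alt: assumes "set K \<subseteq> {1..N}" "length K \<ge> l - 1"
  shows "cls K = orb (B (\<delta> (take (l - 1) K) (drop (l - 1) K)) C)"
    and "B (\<delta> (take (l - 1) K) (drop (l - 1) K)) C \<in> periodic_states N l \<sigma> J"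
proof -
  show "cls K = orb (B (\<delta> (take (l - 1) K) (drop (l - 1) K)) C)"
    by (simp add: cls_def B_def delta_w_append)
  show "B (\<delta> (take (l - 1) K) (drop (l - 1) K)) C \<in> periodic_states N l \<sigma> J"
    using assms by (intro eventually_periodic delta_Q take_Q drop_set)
qed

lemma cls_app_J: assumes "set K \<subseteq> {1..N}" "length K \<ge> l - 1"
  shows "cls (K @ J) = cls K"
proof -
  define x where "x = B (\<delta> (take (l - 1) K) (drop (l - 1) K)) C"
  have per: "x \<in> periodic_states N l \<sigma> J" using cls_alt(2)[OF assms] by (simp add: x_def)
  have z: "l - 1 - length K = 0" using assms by simp
  have t: "take (l - 1) (K @ J) = take (l - 1) K" using z by simp
  have d: "drop (l - 1) (K @ J) = drop (l - 1) K @ J" using z assms by simp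
  have "cls (K @ J) = orb (\<delta> (take (l - 1) K) (drop (l - 1) K @ J @ wpow J C))"
    unfolding cls_def t d by simp
  also have "J @ wpow J C = wpow J C @ J" by (metis wpow_Suc wpow_Suc')
  then have "\<delta> (take (l - 1) K) (drop (l - 1) K @ J @ wpow J C) = B x 1"
    by (simp add: x_def B_def delta_w_append)
  finally have "cls (K @ J) = orb (B x 1)" .
  also have "\<dots> = orb x" using orb_B_eq[OF per, of 1] by simp
  also have "\<dots> = cls K" using cls_alt(1)[OF assms] by (simp add: x_def)
  finally show ?thesis .
qed

lemma cls_app_wpow: assumes "set K \<subseteq> {1..N}" "length K \<ge> l - 1"
  shows "cls (K @ wpow J t) = cls K"
proof (induction t)
  case (Suc t)
  have "cls (K @ wpow J (Suc t)) = cls ((K @ wpow J t) @ J)" by (simp add: wpow_Suc')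
  also have "\<dots> = cls (K @ wpow J t)"
    using assms wpow_N by (intro cls_app_J) auto
  finally show ?case using Suc by simp
qed simp

lemma cls_p: assumes "p \<in> periodic_states N l \<sigma> J" shows "cls p = orb p"
proof -
  have pQ: "p \<in> Q" using assms by (simp add: periodic_states_def)
  then have "cls p = orb (B p C)" by (simp add: cls_def B_def Q_len)
  also have "\<dots> = orb p" using orb_B_eq[OF assms] C_pos by simp
  finally show ?thesis .
qed

lemma V_l2: "f \<in> Vset Ob \<Longrightarrow> f \<in> l2"
  unfolding Vset_def using opw_l2 Om_l2 by blast

lemma T_V: assumes "f \<in> Vset Ob" "a \<in> {1..N}" shows "T a f \<in> Vset Ob"
proof -
  obtain K where K: "f = opw S K \<Omega>" "set K \<subseteq> {1..N}" "length K \<ge> l - 1" "cls K = Ob"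
    using assms by (auto simp: Vset_def)
  define q w where "q = take (l - 1) K" and "w = drop (l - 1) K"
  have qQ: "q \<in> Q" unfolding q_def using K by (intro take_Q)
  have wN: "set w \<subseteq> {1..N}" unfolding w_def using K by (intro drop_set)
  have Kqw: "K = q @ w" by (simp add: q_def w_def)
  have aq: "a # q \<in> W" using qQ assms(2) l1 by (auto simp: words_def)
  then have s: "\<sigma> (a # q) \<in> W" by (rule sigma_W)
  then have ne: "\<sigma> (a # q) \<noteq> []" using l1 by (auto simp: words_def)
  define q' c where "q' = butlast (\<sigma> (a # q))" and "c = last (\<sigma> (a # q))"
  have sq: "\<sigma> (a # q) = q' @ [c]" using ne by (simp add: q'_def c_def)
  have q'Q: "q' \<in> Q" and cN: "c \<in> {1..N}" using s sq by (auto simp: words_def)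
  have md: "mealy_delta \<sigma> q' c = q"
    unfolding mealy_delta_def using sq[symmetric] sigma_inv2 by simp
  have "T a f = opw S (\<sigma> (a # q)) (opw S w \<Omega>)"
    using K(1) Kqw M1[OF qQ assms(2) opw_l2[OF wN Om_l2]] by (simp add: opw_append)
  also have "\<dots> = opw S (q' @ c # w) \<Omega>" by (simp add: sq opw_append)
  finally have Tf: "T a f = opw S (q' @ c # w) \<Omega>" .
  have "cls (q' @ c # w) = orb (\<delta> q' (c # w @ wpow J C))"
    using q'Q by (simp add: cls_def Q_len)
  also have "\<dots> = orb (\<delta> q (w @ wpow J C))" by (simp add: md)
  also have "\<dots> = cls K" using qQ by (simp add: cls_def q_def w_def)
  finally have "cls (q' @ c # w) = Ob" using K by simp
  moreover have "set (q' @ c # w) \<subseteq> {1..N}" "length (q' @ c # w) \<ge> l - 1"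
    using q'Q cN wN by (auto simp: words_def)
  ultimately show ?thesis unfolding Vset_def using Tf by blast
qed

lemma Ta_V: assumes "f \<in> Vset Ob" "a \<in> {1..N}" shows "Ta a f \<in> Vset Ob \<or> Ta a f = (\<lambda>x. 0)"
proof -
  obtain K0 where K0: "f = opw S K0 \<Omega>" "set K0 \<subseteq> {1..N}" "length K0 \<ge> l - 1" "cls K0 = Ob"
    using assms by (auto simp: Vset_def)
  define K where "K = K0 @ J"
  have K: "f = opw S K \<Omega>" "set K \<subseteq> {1..N}" "length K \<ge> l" "cls K = Ob"
    using K0 Jset J1 cls_app_J[OF K0(2,3)] by (auto simp: K_def opw_append Om_fix)
  define q w where "q = take (l - 1) K" and "w = drop (l - 1) K"
  have qQ: "q \<in> Q" unfolding q_def using K by (intro take_Q) auto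
  have wN: "set w \<subseteq> {1..N}" unfolding w_def using K by (intro drop_set)
  have Kqw: "K = q @ w" by (simp add: q_def w_def)
  have "w \<noteq> []" using K l1 by (simp add: w_def)
  then obtain c w' where w: "w = c # w'" by (cases w) auto
  have cN: "c \<in> {1..N}" and w'N: "set w' \<subseteq> {1..N}" using wN w by auto
  have "Ta a f = Ta a (opw S (q @ [c]) (opw S w' \<Omega>))" using K(1) Kqw w by (simp add: opw_append)
  also have "\<dots> = (if a = mealy_lambda \<sigma> q c then opw S (mealy_delta \<sigma> q c) (opw S w' \<Omega>) else (\<lambda>x. 0))"
    by (rule M4[OF qQ cN assms(2) opw_l2[OF w'N Om_l2]])
  finally have Taf: "Ta a f = (if a = mealy_lambda \<sigma> q c then opw S (mealy_delta \<sigma> q c @ w') \<Omega> else (\<lambda>x. 0))"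
    by (simp add: opw_append)
  have mQ: "mealy_delta \<sigma> q c \<in> Q" by (rule md_Q[OF qQ cN])
  have "cls (mealy_delta \<sigma> q c @ w') = orb (\<delta> (mealy_delta \<sigma> q c) (w' @ wpow J C))"
    using mQ by (simp add: cls_def Q_len)
  also have "\<dots> = orb (\<delta> q (w @ wpow J C))" by (simp add: w)
  also have "\<dots> = cls K" using qQ by (simp add: cls_def q_def w_def)
  finally have "cls (mealy_delta \<sigma> q c @ w') = Ob" using K by simp
  moreover have "set (mealy_delta \<sigma> q c @ w') \<subseteq> {1..N}" "length (mealy_delta \<sigma> q c @ w') \<ge> l - 1"
    using mQ w'N by (auto simp: words_def)
  ultimately have "opw S (mealy_delta \<sigma> q c @ w') \<Omega> \<in> Vset Ob" unfolding Vset_def by blast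
  then show ?thesis using Taf by auto
qed

lemma mono_V: "set (map snd z) \<subseteq> {1..N} \<Longrightarrow> f \<in> Vset Ob \<Longrightarrow>
  mono_op T Ta z f \<in> Vset Ob \<or> mono_op T Ta z f = (\<lambda>x. 0)"
proof (induction z)
  case (Cons bi z)
  obtain b i where bi: "bi = (b, i)" by (cases bi)
  have i: "i \<in> {1..N}" and z: "set (map snd z) \<subseteq> {1..N}" using Cons.prems bi by auto
  have "mono_op T Ta (bi # z) f = (if b then T i else Ta i) (mono_op T Ta z f)" using bi by simp
  moreover have "(if b then T i else Ta i) g \<in> Vset Ob \<or> (if b then T i else Ta i) g = (\<lambda>x. 0)"
    if "g \<in> Vset Ob \<or> g = (\<lambda>x. 0)" for g
  proof -
    have z1: "T i (\<lambda>x. 0) = (\<lambda>x. 0)" using lin_zero[OF Tr.S_lin[OF i]] .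
    have z2: "Ta i (\<lambda>x. 0) = (\<lambda>x. 0)" using lin_zero[OF Tr.Sa_lin[OF i]] .
    show ?thesis using that T_V[OF _ i] Ta_V[OF _ i] z1 z2 by auto
  qed
  ultimately show ?case using Cons.IH[OF z Cons.prems(2)] by simp
qed simp

lemma ip_Omega_R: assumes "set R \<subseteq> {1..N}" "ip \<Omega> (opw S R \<Omega>) \<noteq> 0"
  shows "\<exists>t. R = wpow J t"
proof -
  define t b where "t = length R div k" and "b = length R mod k"
  have k0: "k > 0" using J1 by (cases J) auto
  have bk: "b < k" using k0 by (simp add: b_def)
  have lenR: "length R = t * k + b" by (simp add: t_def b_def)
  have lenle: "length R \<le> length (wpow J (Suc t))" using lenR bk by simp
  have "ip \<Omega> (opw S R \<Omega>) = cnj (ip (opw S R \<Omega>) (opw S (wpow J (Suc t)) \<Omega>))"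
    by (simp add: opw_wpow ip_cnj[of \<Omega>])
  also have "ip (opw S R \<Omega>) (opw S (wpow J (Suc t)) \<Omega>) = ip \<Omega> (opa Sa R (opw S (wpow J (Suc t)) \<Omega>))"
    using assms(1) Om_l2 wpow_N by (intro opw_adj opw_l2)
  also have "opa Sa R (opw S (wpow J (Suc t)) \<Omega>)
      = (if R = take (length R) (wpow J (Suc t)) then opw S (drop (length R) (wpow J (Suc t))) \<Omega> else (\<lambda>x. 0))"
    using assms(1) wpow_N lenle Om_l2 by (intro opa_opw_prefix)
  also have "take (length R) (wpow J (Suc t)) = wpow J t @ take b J"
    using wpow_take_drop(1)[of t "Suc t" b J] bk lenR by (simp add: mult.commute)
  also have "drop (length R) (wpow J (Suc t)) = drop b J @ wpow J 0"
    using wpow_take_drop(2)[of t "Suc t" b J] bk lenR by (simp add: mult.commute)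
  finally have ne: "(if R = wpow J t @ take b J then ip \<Omega> (opw S (drop b J) \<Omega>) else 0) \<noteq> 0"
    using assms(2) by (auto split: if_splits)
  then have R: "R = wpow J t @ take b J" by (auto split: if_splits)
  have "ip \<Omega> (opw S (drop b J) \<Omega>) = ip (Om 0) (Om b)" by (simp add: Om_def Om_fix)
  then have "b = 0" using ne Om_on[OF k0 bk] R by (auto split: if_splits)
  then show ?thesis using R by auto
qed

lemma ip_V_le: assumes "set K \<subseteq> {1..N}" "length K \<ge> l - 1" "set K' \<subseteq> {1..N}" "length K' \<ge> l - 1"
  "length K \<le> length K'" "ip (opw S K \<Omega>) (opw S K' \<Omega>) \<noteq> 0"
  shows "cls K = cls K'"
proof -
  have "ip (opw S K \<Omega>) (opw S K' \<Omega>) = ip \<Omega> (opa Sa K (opw S K' \<Omega>))"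
    using assms Om_l2 by (intro opw_adj opw_l2)
  also have "\<dots> = (if K = take (length K) K' then ip \<Omega> (opw S (drop (length K) K') \<Omega>) else 0)"
    using assms Om_l2 by (subst opa_opw_prefix) auto
  finally have ne: "(if K = take (length K) K' then ip \<Omega> (opw S (drop (length K) K') \<Omega>) else 0) \<noteq> 0"
    using assms(6) by simp
  then have K': "K' = K @ drop (length K) K'" by (metis append_take_drop_id)
  have "ip \<Omega> (opw S (drop (length K) K') \<Omega>) \<noteq> 0" using ne by (auto split: if_splits)
  then obtain t where "drop (length K) K' = wpow J t"
    using ip_Omega_R drop_set[OF assms(3)] by blast
  then have "K' = K @ wpow J t" using K' by simp
  then show ?thesis using cls_app_wpow[OF assms(1,2)] by simp
qed

lemma ip_V: assumes "f \<in> Vset Ob" "g \<in> Vset O'" "ip f g \<noteq> 0" shows "Ob = O'"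
proof -
  obtain K where K: "f = opw S K \<Omega>" "set K \<subseteq> {1..N}" "length K \<ge> l - 1" "cls K = Ob"
    using assms by (auto simp: Vset_def)
  obtain K' where K': "g = opw S K' \<Omega>" "set K' \<subseteq> {1..N}" "length K' \<ge> l - 1" "cls K' = O'"
    using assms by (auto simp: Vset_def)
  show ?thesis
  proof (cases "length K \<le> length K'")
    case True then show ?thesis using ip_V_le[OF K(2,3) K'(2,3) True] assms(3) K K' by simp
  next
    case False
    have "ip g f \<noteq> 0" using assms(3) by (metis ip_cnj complex_cnj_zero)
    then show ?thesis using ip_V_le[OF K'(2,3) K(2,3)] False K K' by simp
  qed
qed

end

declare One_nat_def [simp del]

lemma cspan_l2: assumes "X \<subseteq> l2" "f \<in> c_span X" shows "f \<in> l2"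
proof -
  have "\<exists>(n::nat) c v. (\<forall>i<n. v i \<in> X) \<and> f = (\<lambda>x. \<Sum>i<n. c i * v i x)"
    using assms(2) by (simp add: c_span_def)
  then obtain n :: nat and c v where "\<forall>i<n. v i \<in> X" "f = (\<lambda>x. \<Sum>i<n. c i * v i x)" by blast
  then show ?thesis using assms(1) by (auto intro!: l2_sum l2_scale)
qed

lemma ip_cspan: assumes "X \<subseteq> l2" "Y \<subseteq> l2" "\<forall>x\<in>X. \<forall>y\<in>Y. ip x y = 0"
  "f \<in> c_span X" "g \<in> c_span Y" shows "ip f g = 0"
proof -
  have "\<exists>(n::nat) c v. (\<forall>i<n. v i \<in> X) \<and> f = (\<lambda>x. \<Sum>i<n. c i * v i x)"
    using assms(4) by (simp add: c_span_def)
  then obtain n :: nat and c v where v: "\<forall>i<n. v i \<in> X" "f = (\<lambda>x. \<Sum>i<n. c i * v i x)" by blast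
  have "\<exists>(n::nat) c v. (\<forall>i<n. v i \<in> Y) \<and> g = (\<lambda>x. \<Sum>i<n. c i * v i x)"
    using assms(5) by (simp add: c_span_def)
  then obtain m :: nat and d w where w: "\<forall>j<m. w j \<in> Y" "g = (\<lambda>x. \<Sum>j<m. d j * w j x)" by blast
  have gl: "g \<in> l2" using assms(2,5) by (rule cspan_l2)
  have "\<And>i. i < n \<Longrightarrow> ip (v i) g = 0"
  proof -
    fix i assume i: "i < n"
    have "ip (v i) g = (\<Sum>j<m. ip (v i) (\<lambda>x. d j * w j x))"
      unfolding w(2) using w(1) v(1) i assms(1,2) by (intro ip_sum_right) (auto intro!: l2_scale)
    also have "\<dots> = (\<Sum>j<m. d j * ip (v i) (w j))"
      using w(1) v(1) i assms(1,2) by (intro sum.cong refl ip_scale_right) auto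
    also have "\<dots> = 0" using w(1) v(1) i assms(3) by simp
    finally show "ip (v i) g = 0" .
  qed
  have "ip f g = (\<Sum>i<n. ip (\<lambda>x. c i * v i x) g)"
    unfolding v(2) using v(1) assms(1) gl by (intro ip_sum_left) (auto intro!: l2_scale)
  also have "\<dots> = (\<Sum>i<n. cnj (c i) * ip (v i) g)"
    using v(1) assms(1) gl by (intro sum.cong refl ip_scale_left) auto
  also have "\<dots> = 0" using \<open>\<And>i. i < n \<Longrightarrow> ip (v i) g = 0\<close> by simp
  finally show ?thesis .
qed

lemma l2norm_swap: "l2norm (\<lambda>x. f x - g x) = l2norm (\<lambda>x. g x - f x)"
  unfolding l2norm_def by (simp add: norm_minus_commute)

lemma small_zero: fixes x A :: real
  assumes "x \<ge> 0" "A \<ge> 0" "\<And>e. e > 0 \<Longrightarrow> x \<le> e * A + e * e" shows "x = 0"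
proof (rule ccontr)
  assume "x \<noteq> 0" then have xp: "x > 0" using assms by simp
  define e where "e = min 1 (x / (2 * (A + 1)))"
  have ep: "e > 0" using xp assms by (simp add: e_def)
  have e1: "e \<le> 1" and e2: "e \<le> x / (2 * (A + 1))" by (simp_all add: e_def)
  have "e * A + e * e \<le> e * A + e * 1" using ep e1 by (intro add_left_mono mult_left_mono) auto
  also have "\<dots> = e * (A + 1)" by (simp add: algebra_simps)
  also have "\<dots> \<le> x / (2 * (A + 1)) * (A + 1)" using e2 assms by (intro mult_right_mono) auto
  also have "\<dots> = x / 2" using assms by (simp add: field_simps)
  finally show False using assms(3)[OF ep] xp by simp
qed

lemma ip_clspan: assumes "X \<subseteq> l2" "Y \<subseteq> l2" "\<forall>x\<in>X. \<forall>y\<in>Y. ip x y = 0"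
  "f \<in> cl_span X" "g \<in> cl_span Y" shows "ip f g = 0"
proof -
  have fl: "f \<in> l2" and gl: "g \<in> l2" using assms(4,5) by (auto simp: cl_span_def)
  have "cmod (ip f g) = 0"
  proof (rule small_zero)
    show "cmod (ip f g) \<ge> 0" by simp
    show "l2norm f + l2norm g \<ge> 0" by (simp add: l2norm_nonneg add_nonneg_nonneg)
    fix e :: real assume e: "e > 0"
    obtain f' where f': "f' \<in> c_span X" "l2norm (\<lambda>x. f x - f' x) < e"
      using assms(4) e by (auto simp: cl_span_def)
    obtain g' where g': "g' \<in> c_span Y" "l2norm (\<lambda>x. g x - g' x) < e"
      using assms(5) e by (auto simp: cl_span_def)
    have f'l: "f' \<in> l2" using assms(1) f'(1) by (rule cspan_l2)
    have g'l: "g' \<in> l2" using assms(2) g'(1) by (rule cspan_l2)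
    have d1: "(\<lambda>x. f x - f' x) \<in> l2" using fl f'l by (rule l2_minus)
    have d2: "(\<lambda>x. g x - g' x) \<in> l2" using gl g'l by (rule l2_minus)
    have d3: "(\<lambda>x. f' x - f x) \<in> l2" using fl f'l by (intro l2_minus)
    have z: "ip f' g' = 0" using ip_cspan[OF assms(1,2,3) f'(1) g'(1)] .
    have e1: "ip (\<lambda>x. f x - f' x) g = ip f g - ip f' g" using fl f'l gl by (rule ip_minus_left)
    have e2: "ip f' (\<lambda>x. g x - g' x) = ip f' g - ip f' g'" using gl g'l f'l by (rule ip_minus_right)
    have split: "ip f g = ip (\<lambda>x. f x - f' x) g + ip f' (\<lambda>x. g x - g' x)"
      using e1 e2 z by simp
    have n1: "cmod (ip (\<lambda>x. f x - f' x) g) \<le> e * l2norm g"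
    proof -
      have "cmod (ip (\<lambda>x. f x - f' x) g) \<le> l2norm (\<lambda>x. f x - f' x) * l2norm g"
        using d1 gl by (rule cauchy_schwarz)
      also have "\<dots> \<le> e * l2norm g" using f'(2) by (intro mult_right_mono) (auto simp: l2norm_nonneg)
      finally show ?thesis .
    qed
    have nf': "l2norm f' \<le> l2norm f + e"
    proof -
      have "f' = (\<lambda>x. f x + (f' x - f x))" by simp
      then have "l2norm f' = l2norm (\<lambda>x. f x + (f' x - f x))" by simp
      also have "\<dots> \<le> l2norm f + l2norm (\<lambda>x. f' x - f x)" using fl d3 by (rule l2norm_triangle)
      also have "l2norm (\<lambda>x. f' x - f x) = l2norm (\<lambda>x. f x - f' x)" by (rule l2norm_swap)
      finally show ?thesis using f'(2) by simp
    qed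
    have n2: "cmod (ip f' (\<lambda>x. g x - g' x)) \<le> (l2norm f + e) * e"
    proof -
      have "cmod (ip f' (\<lambda>x. g x - g' x)) \<le> l2norm f' * l2norm (\<lambda>x. g x - g' x)"
        using f'l d2 by (rule cauchy_schwarz)
      also have "\<dots> \<le> (l2norm f + e) * e"
        using nf' g'(2) \<open>e > 0\<close> l2norm_nonneg[of f] l2norm_nonneg[of f'] l2norm_nonneg[of "\<lambda>x. g x - g' x"]
        by (intro mult_mono) auto
      finally show ?thesis .
    qed
    have "cmod (ip f g) \<le> cmod (ip (\<lambda>x. f x - f' x) g) + cmod (ip f' (\<lambda>x. g x - g' x))"
      unfolding split by (rule norm_triangle_ineq)
    also have "\<dots> \<le> e * l2norm g + (l2norm f + e) * e" using n1 n2 by simp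
    also have "\<dots> = e * (l2norm f + l2norm g) + e * e" by (simp add: algebra_simps)
    finally show "cmod (ip f g) \<le> e * (l2norm f + l2norm g) + e * e" .
  qed
  then show ?thesis by simp
qed

lemma gen_clspan: assumes "v \<in> X" "X \<subseteq> l2" shows "v \<in> cl_span X"
proof -
  have vl: "v \<in> l2" using assms by auto
  have "v \<in> c_span X"
    unfolding c_span_def
    by (rule CollectI, rule exI[of _ "Suc 0"], rule exI[of _ "\<lambda>_. 1"], rule exI[of _ "\<lambda>_. v"])
       (simp add: assms(1))
  then show ?thesis unfolding cl_span_def
  proof (intro CollectI conjI allI impI)
    show "v \<in> l2" by (rule vl)
    fix e :: real assume "e > 0" "v \<in> c_span X"
    then show "\<exists>g\<in>c_span X. l2norm (\<lambda>x. v x - g x) < e" by (intro bexI[of _ v]) simp_all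
  qed
qed

lemma zero_clspan: "(\<lambda>x. 0) \<in> cl_span X"
proof -
  have "(\<lambda>x. 0) \<in> c_span X"
    unfolding c_span_def
    by (rule CollectI, rule exI[of _ "0"], rule exI[of _ "\<lambda>_. 1"], rule exI[of _ "\<lambda>_. undefined"]) simp
  then show ?thesis unfolding cl_span_def
  proof (intro CollectI conjI allI impI)
    show "(\<lambda>x. 0) \<in> l2" by (rule l2_zero)
    fix e :: real assume "e > 0" "(\<lambda>x. 0) \<in> c_span X"
    then show "\<exists>g\<in>c_span X. l2norm (\<lambda>x. 0 - g x) < e" by (intro bexI[of _ "\<lambda>x. 0"]) simp_all
  qed
qed

lemma cspan_mono: assumes "X \<subseteq> Y" shows "c_span X \<subseteq> c_span Y"
proof
  fix g assume "g \<in> c_span X"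
  then have "\<exists>(n::nat) c v. (\<forall>i<n. v i \<in> X) \<and> g = (\<lambda>x. \<Sum>i<n. c i * v i x)"
    by (simp add: c_span_def)
  then obtain n :: nat and c v where "\<forall>i<n. v i \<in> X" "g = (\<lambda>x. \<Sum>i<n. c i * v i x)" by blast
  then show "g \<in> c_span Y" using assms unfolding c_span_def by blast
qed

lemma clspan_mono: assumes "X \<subseteq> Y" shows "cl_span X \<subseteq> cl_span Y"
proof
  fix f assume f: "f \<in> cl_span X"
  show "f \<in> cl_span Y" unfolding cl_span_def
  proof (intro CollectI conjI allI impI)
    show "f \<in> l2" using f by (simp add: cl_span_def)
    fix e :: real assume "e > 0"
    then obtain g where "g \<in> c_span X" "l2norm (\<lambda>x. f x - g x) < e" using f by (auto simp: cl_span_def)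
    then show "\<exists>g\<in>c_span Y. l2norm (\<lambda>x. f x - g x) < e" using cspan_mono[OF assms] by blast
  qed
qed

context main
begin

lemma PJ_T: assumes pp: "p \<in> periodic_states N l \<sigma> J"
  shows "PJ_vector T (lw p (wpow J (card (orb p)))) (opw S p \<Omega>)"
proof -
  define r where "r = card (orb p)"
  define Wd where "Wd = wpow J r"
  have r: "r = P p" using card_orb[OF pp] by (simp add: r_def)
  have r1: "r \<ge> 1" using P1[OF pp] r by simp
  have pQ: "p \<in> Q" using p_Q[OF pp] .
  have WN: "set Wd \<subseteq> {1..N}" unfolding Wd_def by (rule wpow_N)
  have dp: "\<delta> p Wd = p" using BP[OF pp] r by (simp add: B_def Wd_def)
  have k0: "k > 0" using J1 by (cases J) auto
  have vl: "opw S p \<Omega> \<in> l2" using Q_set[OF pQ] Om_l2 by (rule opw_l2)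
  have D: "opw T (drop m (lw p Wd)) (opw S p \<Omega>) = opw S (\<delta> p (take m Wd)) (Om (m mod k))"
    if m: "m < r * k" for m
  proof -
    define a b where "a = m div k" and "b = m mod k"
    have ab: "m = a * k + b" "a < r" "b < k" using m k0
      by (auto simp: a_def b_def less_mult_imp_div_less)
    define q where "q = \<delta> p (take m Wd)"
    have qQ: "q \<in> Q" unfolding q_def using pQ WN by (intro delta_Q) (auto dest: in_set_takeD)
    have dN: "set (drop m Wd) \<subseteq> {1..N}" using WN by (rule drop_set)
    have dq: "\<delta> q (drop m Wd) = p" unfolding q_def using dp by (metis append_take_drop_id delta_w_append)
    have dl: "drop m (lw p Wd) = lw q (drop m Wd)" by (simp add: lambda_w_drop q_def)
    have "opw T (drop m (lw p Wd)) (opw S p \<Omega>) = opw T (lw q (drop m Wd)) (opw S (\<delta> q (drop m Wd)) \<Omega>)"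
      by (simp only: dl dq)
    also have "\<dots> = opw S q (opw S (drop m Wd) \<Omega>)" by (rule M3[OF qQ dN Om_l2])
    also have "drop m Wd = drop b J @ wpow J (r - Suc a)"
      unfolding Wd_def using wpow_take_drop(2)[OF ab(2,3)] ab(1) by simp
    also have "opw S (drop b J @ wpow J (r - Suc a)) \<Omega> = Om b"
      by (simp add: opw_append opw_wpow Om_def)
    finally show ?thesis by (simp add: q_def b_def)
  qed
  have E: "m = m'" if m: "m < r * k" and m': "m' < r * k"
    and eq: "\<delta> p (take m Wd) = \<delta> p (take m' Wd)" and md: "m mod k = m' mod k" for m m'
  proof -
    have key: "\<delta> (\<delta> p (take x Wd)) (drop (x mod k) J) = B p (Suc (x div k))" if x: "x < r * k" for x
    proof -
      have ab: "x = (x div k) * k + x mod k" "x div k < r" "x mod k < k" using x k0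
        by (auto simp: less_mult_imp_div_less)
      have "take x Wd = wpow J (x div k) @ take (x mod k) J"
        unfolding Wd_def using wpow_take_drop(1)[OF ab(2,3)] ab(1) by simp
      then have "\<delta> (\<delta> p (take x Wd)) (drop (x mod k) J) = \<delta> p (wpow J (x div k) @ J)"
        by (simp add: delta_w_append[symmetric])
      then show ?thesis by (simp add: B_def wpow_Suc')
    qed
    have "B p (Suc (m div k)) = B p (Suc (m' div k))" using key[OF m] key[OF m'] eq md by simp
    moreover have "m div k < r" "m' div k < r" using m m' k0 by (auto simp: less_mult_imp_div_less)
    ultimately have "m div k = m' div k"
      using B_inj[OF pp, of "Suc (m div k)" "Suc (m' div k)"] B_inj[OF pp, of "Suc (m' div k)" "Suc (m div k)"] r
      by (metis Suc_le_eq Suc_less_eq le_add1 linorder_neqE_nat plus_1_eq_Suc)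
    then show ?thesis using md by (metis div_mult_mod_eq)
  qed
  have fx: "opw T (lw p Wd) (opw S p \<Omega>) = opw S p \<Omega>"
    using M3[OF pQ WN Om_l2] dp by (simp add: Wd_def opw_wpow)
  have ON: "ip (opw T (drop m (lw p Wd)) (opw S p \<Omega>)) (opw T (drop m' (lw p Wd)) (opw S p \<Omega>)) = (if m = m' then 1 else 0)"
    if m: "m < length (lw p Wd)" and m': "m' < length (lw p Wd)" for m m'
  proof -
    have m1: "m < r * k" and m1': "m' < r * k" using m m' by (simp_all add: Wd_def)
    have q1: "\<delta> p (take m Wd) \<in> Q" and q2: "\<delta> p (take m' Wd) \<in> Q"
      using pQ WN by (auto intro!: delta_Q dest: in_set_takeD)
    have "ip (opw S (\<delta> p (take m Wd)) (Om (m mod k))) (opw S (\<delta> p (take m' Wd)) (Om (m' mod k)))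
        = (if \<delta> p (take m Wd) = \<delta> p (take m' Wd) then ip (Om (m mod k)) (Om (m' mod k)) else 0)"
      using q1 q2 by (intro ip_opw_same Q_set Om_l2') (simp_all add: Q_len)
    also have "\<dots> = (if m = m' then 1 else 0)"
      using E[OF m1 m1'] Om_on[of "m mod k" "m' mod k"] k0 by auto
    finally show ?thesis using D[OF m1] D[OF m1'] by simp
  qed
  show ?thesis unfolding PJ_vector_def
    using vl l2norm_opw[OF Q_set[OF pQ] Om_l2] Om_norm fx ON by (simp add: r_def Wd_def)
qed

lemma S_mono: "set (map snd z) \<subseteq> {1..N} \<Longrightarrow>
  mono_op S Sa z \<Omega> = (\<lambda>x. 0) \<or> (\<exists>K. set K \<subseteq> {1..N} \<and> mono_op S Sa z \<Omega> = opw S K \<Omega>)"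
proof (induction z)
  case Nil then show ?case by (intro disjI2 exI[of _ "[]"]) simp
next
  case (Cons bi z)
  obtain b i where bi: "bi = (b, i)" by (cases bi)
  have i: "i \<in> {1..N}" and z: "set (map snd z) \<subseteq> {1..N}" using Cons.prems bi by auto
  have z1: "S i (\<lambda>x. 0) = (\<lambda>x. 0)" using lin_zero[OF S_lin[OF i]] .
  have z2: "Sa i (\<lambda>x. 0) = (\<lambda>x. 0)" using lin_zero[OF Sa_lin[OF i]] .
  have e: "mono_op S Sa (bi # z) \<Omega> = (if b then S i else Sa i) (mono_op S Sa z \<Omega>)" using bi by simp
  from Cons.IH[OF z] show ?case
  proof
    assume "mono_op S Sa z \<Omega> = (\<lambda>x. 0)" then show ?thesis using e z1 z2 by simp
  next
    assume "\<exists>K. set K \<subseteq> {1..N} \<and> mono_op S Sa z \<Omega> = opw S K \<Omega>"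
    then obtain K where K: "set K \<subseteq> {1..N}" "mono_op S Sa z \<Omega> = opw S K \<Omega>" by blast
    show ?thesis
    proof (cases b)
      case True
      then have "mono_op S Sa (bi # z) \<Omega> = opw S (i # K) \<Omega>" using e K by simp
      then show ?thesis using K i by (intro disjI2 exI[of _ "i # K"]) simp
    next
      case False
      define K' where "K' = (if K = [] then J else K)"
      have K': "set K' \<subseteq> {1..N}" "K' \<noteq> []" "opw S K' \<Omega> = opw S K \<Omega>"
        using K Jset J1 Om_fix by (auto simp: K'_def)
      then obtain c K'' where cK: "K' = c # K''" by (cases K') auto
      have c: "c \<in> {1..N}" and K'': "set K'' \<subseteq> {1..N}" using K' cK by auto
      have "mono_op S Sa (bi # z) \<Omega> = Sa i (S c (opw S K'' \<Omega>))" using e K False K'(3) cK by simp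
      also have "\<dots> = (if i = c then opw S K'' \<Omega> else (\<lambda>x. 0))"
        using i c K'' Om_l2 by (intro SaS opw_l2)
      finally show ?thesis using K'' by auto
    qed
  qed
qed

end

declare One_nat_def [simp del]

context main
begin

lemma gen_T: assumes pM: "\<forall>i<M. p i \<in> periodic_states N l \<sigma> J"
  and un: "(\<Union>i<M. orb (p i)) = periodic_states N l \<sigma> J" and K: "set K \<subseteq> {1..N}"
  shows "\<exists>i<M. \<exists>z. set (map snd z) \<subseteq> {1..N} \<and> opw S K \<Omega> = mono_op T Ta z (opw S (p i) \<Omega>)"
proof -
  define K' where "K' = K @ wpow J l"
  have K'N: "set K' \<subseteq> {1..N}" using K wpow_N by (auto simp: K'_def)
  have lk: "l \<le> l * k" using J1 by simp
  have "length K' = length K + l * k" by (simp add: K'_def)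
  then have lenK': "length K' \<ge> l - 1" using lk by linarith
  have eK: "opw S K' \<Omega> = opw S K \<Omega>" by (simp add: K'_def opw_append opw_wpow)
  define q w0 where "q = take (l - 1) K'" and "w0 = drop (l - 1) K'"
  define w where "w = w0 @ wpow J C"
  have qQ: "q \<in> Q" unfolding q_def using K'N lenK' by (rule take_Q)
  have w0N: "set w0 \<subseteq> {1..N}" unfolding w0_def using K'N by (rule drop_set)
  have wN: "set w \<subseteq> {1..N}" using w0N wpow_N by (auto simp: w_def)
  have e1: "opw S K \<Omega> = opw S q (opw S w \<Omega>)"
  proof -
    have "opw S K \<Omega> = opw S (q @ w0) \<Omega>" using eK by (simp add: q_def w0_def)
    also have "\<dots> = opw S q (opw S w \<Omega>)" by (simp add: w_def opw_append opw_wpow)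
    finally show ?thesis .
  qed
  have e2: "opw S q (opw S w \<Omega>) = opw T (lw q w) (opw S (\<delta> q w) \<Omega>)"
    using M3[OF qQ wN Om_l2] by simp
  define x where "x = \<delta> q w"
  have xB: "x = B (\<delta> q w0) C" by (simp add: x_def w_def B_def delta_w_append)
  have xper: "x \<in> periodic_states N l \<sigma> J"
    unfolding xB using qQ w0N by (intro eventually_periodic delta_Q)
  then obtain i where i: "i < M" "x \<in> orb (p i)" using un by auto
  have ppi: "p i \<in> periodic_states N l \<sigma> J" using pM i by simp
  have piQ: "p i \<in> Q" using p_Q[OF ppi] .
  obtain n where n: "n \<ge> 1" "x = B (p i) n" using i(2) by (auto simp: orb_B)
  define z0 where "z0 = lw (p i) (wpow J n)"
  have z0N: "set z0 \<subseteq> {1..N}" unfolding z0_def using piQ wpow_N by (rule lambda_set)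
  have e3: "opw T z0 (opw S x \<Omega>) = opw S (p i) \<Omega>"
    using M3[OF piQ wpow_N Om_l2, of n] n(2) by (simp add: z0_def B_def opw_wpow)
  have xl: "opw S x \<Omega> \<in> l2" using xper Om_l2 by (intro opw_l2 Q_set p_Q)
  have e4: "opw S x \<Omega> = opa Ta z0 (opw S (p i) \<Omega>)"
    using Tr.opa_opw_same[OF z0N xl] e3 by simp
  define y where "y = lw q w"
  have yN: "set y \<subseteq> {1..N}" unfolding y_def using qQ wN by (rule lambda_set)
  have "opw S K \<Omega> = opw T y (opa Ta z0 (opw S (p i) \<Omega>))"
    using e1 e2 e4 by (simp add: x_def y_def)
  also have "\<dots> = mono_op T Ta (map (Pair True) y @ map (Pair False) (rev z0)) (opw S (p i) \<Omega>)"
    by (simp add: mono_op_append opw_mono[of T y Ta] opa_mono[of Ta z0 T])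
  finally have "opw S K \<Omega> = mono_op T Ta (map (Pair True) y @ map (Pair False) (rev z0)) (opw S (p i) \<Omega>)" .
  moreover have "set (map snd (map (Pair True) y @ map (Pair False) (rev z0))) \<subseteq> {1..N}"
    using yN z0N by auto
  ultimately show ?thesis using i(1) by blast
qed

end

theorem theorem1p3:
  fixes N l :: nat and \<sigma> :: "nat list \<Rightarrow> nat list" and J :: "nat list"
    and M :: nat and p :: "nat \<Rightarrow> nat list"
    and S Sa :: "nat \<Rightarrow> ('a \<Rightarrow> complex) \<Rightarrow> ('a \<Rightarrow> complex)"
  assumes "N \<ge> 2" and "l \<ge> 1"
    and "\<sigma> permutes words N l"
    and "length J \<ge> 1" and "set J \<subseteq> {1..N}" and "nonperiodic J"
    and "\<forall>i<M. p i \<in> periodic_states N l \<sigma> J"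
    and "\<forall>i<M. \<forall>i'<M. i \<noteq> i' \<longrightarrow> orbit_state \<sigma> J (p i) \<inter> orbit_state \<sigma> J (p i') = {}"
    and "(\<Union>i<M. orbit_state \<sigma> J (p i)) = periodic_states N l \<sigma> J"
    and "is_P N S Sa J"
  shows "is_sum_P N (comp_psi_S N l \<sigma> S Sa) (comp_psi_Sa N l \<sigma> S Sa) M
           (\<lambda>i. lambda_w \<sigma> (p i) (wpow J (card (orbit_state \<sigma> J (p i)))))"
proof -
  obtain \<Omega> where rep: "cuntz_rep N S Sa" and PJ: "PJ_vector S J \<Omega>" and cyc: "cyclic_space N S Sa \<Omega> = l2"
    using assms(10) by (auto simp: is_P_def)
  have "main N S Sa l \<sigma> J \<Omega>"
    unfolding main_def main_axioms_def crep_perm_def crep_perm_axioms_def crep_def mealy_def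
    using rep PJ assms(2-5) by auto
  then interpret main N S Sa l \<sigma> J \<Omega> .
  define \<Omega>s where "\<Omega>s i = opw S (p i) \<Omega>" for i
  define Gen where "Gen i = {mono_op T Ta w (\<Omega>s i) | w. set (map snd w) \<subseteq> {1..N}}" for i
  have cycT: "cyclic_space N T Ta (\<Omega>s i) = cl_span (Gen i)" for i
    by (simp add: cyclic_space_def Gen_def)
  have ppi: "p i \<in> periodic_states N l \<sigma> J" if "i < M" for i using assms(7) that by simp
  have OmV: "\<Omega>s i \<in> Vset (orb (p i))" if "i < M" for i
  proof -
    have "p i \<in> Q" using p_Q[OF ppi[OF that]] .
    then have "set (p i) \<subseteq> {1..N}" "length (p i) \<ge> l - 1" using Q_set Q_len by auto
    then show ?thesis unfolding Vset_def \<Omega>s_def using cls_p[OF ppi[OF that]] by blast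
  qed
  have GenV: "x \<in> Vset (orb (p i)) \<or> x = (\<lambda>x. 0)" if "i < M" "x \<in> Gen i" for i x
    using that mono_V[OF _ OmV] by (auto simp: Gen_def)
  have Gen_l2: "Gen i \<subseteq> l2" if "i < M" for i
    using GenV[OF that] V_l2 l2_zero by blast
  have orth: "ip x y = 0" if "i < M" "i' < M" "i \<noteq> i'" "x \<in> Gen i" "y \<in> Gen i'" for i i' x y
  proof (rule ccontr)
    assume ne: "ip x y \<noteq> 0"
    then have "x \<in> Vset (orb (p i))" "y \<in> Vset (orb (p i'))" using GenV that by fastforce+
    then have "orb (p i) = orb (p i')" using ip_V ne by blast
    moreover have "p i \<in> orb (p i)" using p_orb[OF ppi[OF that(1)]] .
    ultimately show False using assms(8) that by blast
  qed
  have M0: "M > 0"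
  proof -
    have "B (replicate (l - 1) 1) C \<in> periodic_states N l \<sigma> J" using eventually_periodic[OF Q_ne] .
    then show ?thesis using assms(9) by (metis (no_types, lifting) UN_E gr_zeroI lessThan_iff not_less_zero)
  qed
  have dens: "l2 \<subseteq> cl_span (\<Union>i<M. cyclic_space N T Ta (\<Omega>s i))"
  proof -
    have "{mono_op S Sa w \<Omega> | w. set (map snd w) \<subseteq> {1..N}} \<subseteq> (\<Union>i<M. cyclic_space N T Ta (\<Omega>s i))"
    proof
      fix x assume "x \<in> {mono_op S Sa w \<Omega> | w. set (map snd w) \<subseteq> {1..N}}"
      then obtain w where w: "set (map snd w) \<subseteq> {1..N}" "x = mono_op S Sa w \<Omega>" by blast
      from S_mono[OF w(1)] show "x \<in> (\<Union>i<M. cyclic_space N T Ta (\<Omega>s i))"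
      proof
        assume "mono_op S Sa w \<Omega> = (\<lambda>x. 0)"
        then have "x \<in> cyclic_space N T Ta (\<Omega>s 0)" using w(2) cycT zero_clspan by simp
        then show ?thesis using M0 by blast
      next
        assume "\<exists>K. set K \<subseteq> {1..N} \<and> mono_op S Sa w \<Omega> = opw S K \<Omega>"
        then obtain K where K: "set K \<subseteq> {1..N}" "x = opw S K \<Omega>" using w(2) by blast
        obtain i z where iz: "i < M" "set (map snd z) \<subseteq> {1..N}" "opw S K \<Omega> = mono_op T Ta z (opw S (p i) \<Omega>)"
          using gen_T[OF assms(7,9) K(1)] by blast
        have "x \<in> Gen i" using K(2) iz by (auto simp: Gen_def \<Omega>s_def)
        then have "x \<in> cyclic_space N T Ta (\<Omega>s i)" using gen_clspan Gen_l2[OF iz(1)] cycT by simp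
        then show ?thesis using iz(1) by blast
      qed
    qed
    then have "cl_span {mono_op S Sa w \<Omega> | w. set (map snd w) \<subseteq> {1..N}} \<subseteq> cl_span (\<Union>i<M. cyclic_space N T Ta (\<Omega>s i))"
      by (rule clspan_mono)
    then show ?thesis using cyc by (simp add: cyclic_space_def)
  qed
  show ?thesis unfolding is_sum_P_def
  proof (intro conjI exI[of _ \<Omega>s])
    show "cuntz_rep N T Ta" by (rule T_cuntz)
    show "\<forall>i<M. PJ_vector T (lambda_w \<sigma> (p i) (wpow J (card (orbit_state \<sigma> J (p i))))) (\<Omega>s i)"
      using PJ_T ppi by (simp add: \<Omega>s_def)
    show "\<forall>i<M. \<forall>i'<M. i \<noteq> i' \<longrightarrow>
      (\<forall>f\<in>cyclic_space N T Ta (\<Omega>s i). \<forall>g\<in>cyclic_space N T Ta (\<Omega>s i'). ip f g = 0)"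
    proof (intro allI impI ballI)
      fix i i' f g assume ii: "i < M" "i' < M" "i \<noteq> i'" and f: "f \<in> cyclic_space N T Ta (\<Omega>s i)"
        and g: "g \<in> cyclic_space N T Ta (\<Omega>s i')"
      show "ip f g = 0"
        using ip_clspan[OF Gen_l2[OF ii(1)] Gen_l2[OF ii(2)] _ f[unfolded cycT] g[unfolded cycT]] orth[OF ii]
        by blast
    qed
    show "cl_span (\<Union>i<M. cyclic_space N T Ta (\<Omega>s i)) = l2"
      using dens by (auto simp: cl_span_def)
  qed
qed

end
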